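(* Suppose $1/n\ll\varepsilon\ll\varepsilon_1\ll\eta_1\ll\tau\ll\varepsilon_3\ll\eta_2\ll 1$ and let $G$ be an $\varepsilon$-extremal digraph on $n$ vertices with $\delta^0(G)\geq n/2$. Then there is a partition of $V(G)$ into sets $A,B,S,T$ of sizes $a,b,s,t$ satisfying one of the following: (1) conditions (P1)–(P7); (2) conditions (Q1)–(Q8) together with $a\leq b$; (3) conditions (R1)–(R9).
   Context: Digraphs have no loops and at most one edge in each direction between two vertices. $\delta^0(G)$ is the minimum semidegree (minimum over vertices of the minimum of in- and outdegree). For $X\subseteq V(G)$ and a vertex $x$, $d^+_X(x)=|N^+(x)\cap X|$, $d^-_X(x)=|N^-(x)\cap X|$, and $d^\pm_X(x)\geq c$ means both $d^+_X(x)\geq c$ and $d^-_X(x)\geq c$. $E(X,Y)$ is the set of edges $xy$ with $x\in X,y\in Y$, $e(X,Y)=|E(X,Y)|$; $G[X]$ is the induced subdigraph; $G[X,Y]$ is the digraph on $X\cup Y$ with edge set $E(X,Y)\cup E(Y,X)$. $G$ is $\varepsilon$-extremal if there is a partition $A,B,S,T$ of $V(G)$ with sizes $a,b,s,t$ such that $|a-b|,|s-t|\leq1$ and $e(A\cup S,A\cup T)<\varepsilon n^2$. Conditions for a partition $A,B,S,T$ of $V(G)$ with sizes $a,b,s,t$: (P1) $\lfloor n/2\rfloor-\varepsilon_3 n\leq s,t\leq \lceil n/2\rceil+\varepsilon_3 n$; (P2) $\delta^0(G[S]),\delta^0(G[T])\geq \eta_2 n$; (P3) $d^\pm_S(x)\geq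 n/2-\varepsilon_3 n$ for all but at most $\varepsilon_3 n$ vertices $x\in S$; (P4) $d^\pm_T(x)\geq n/2-\varepsilon_3 n$ for all but at most $\varepsilon_3 n$ vertices $x\in T$; (P5) $a+b\leq\varepsilon_3 n$; (P6) for all $x\in A$: $d^-_T(x),d^+_S(x)>n/2-3\eta_2 n$ and $d^-_S(x),d^+_T(x)\leq 3\eta_2 n$; (P7) for all $x\in B$: $d^-_S(x),d^+_T(x)>n/2-3\eta_2 n$ and $d^-_T(x),d^+_S(x)\leq 3\eta_2 n$. (Q1) $\lfloor n/2\rfloor-\varepsilon_3 n\leq a,b\leq\lceil n/2\rceil+\varepsilon_3 n$; (Q2) $\delta^0(G[A,B])\geq n/50$; (Q3) $d^\pm_B(x)\geq n/2-\varepsilon_3 n$ for all but at most $\varepsilon_3 n$ vertices $x\in A$; (Q4) $d^\pm_A(x)\geq n/2-\varepsilon_3 n$ for all but at most $\varepsilon_3 n$ vertices $x\in B$; (Q5) $s+t\leq\varepsilon_3 n$; (Q6) $d^-_A(x),d^+_B(x)\geq n/50$ for all $x\in S$; (Q7) $d^-_B(x),d^+_A(x)\geq n/50$ for all $x\in T$; (Q8) if $a<b$, then $d^\pm_B(x)<n/20$ for all $x\in B$ (i.e. both $d^+_B(x),d^-_B(x)<n/20$), $d^-_B(x)<n/20$ for all $x\in S$ and $d^+_B(x)<n/20$ for all $x\in T$. (R1) $a,b,s,t\geq\tau n$; (R2) $|a-b|,|s-t|\leq\varepsilon_1 n$; (R3) $\delta^0(G[A,B])\geq\eta_1 n$; (R4)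 $d^+_{B\cup S}(x),d^-_{A\cup S}(x)\geq\eta_1 n$ for all $x\in S$; (R5) $d^+_{A\cup T}(x),d^-_{B\cup T}(x)\geq\eta_1 n$ for all $x\in T$; (R6) $d^\pm_B(x)\geq b-\varepsilon^{1/3}n$ for all but at most $\varepsilon_1 n$ vertices $x\in A$; (R7) $d^\pm_A(x)\geq a-\varepsilon^{1/3}n$ for all but at most $\varepsilon_1 n$ vertices $x\in B$; (R8) $d^+_{B\cup S}(x)\geq b+s-\varepsilon^{1/3}n$ and $d^-_{A\cup S}(x)\geq a+s-\varepsilon^{1/3}n$ for all but at most $\varepsilon_1 n$ vertices $x\in S$; (R9) $d^+_{A\cup T}(x)\geq a+t-\varepsilon^{1/3}n$ and $d^-_{B\cup T}(x)\geq b+t-\varepsilon^{1/3}n$ for all but at most $\varepsilon_1 n$ vertices $x\in T$. The hierarchy $\alpha\ll\beta$ means the statement holds whenever $\alpha$ is sufficiently small as a function of $\beta$; constants are chosen from right to left. *)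

theory Defs
  imports Complex_Main
begin

text \<open>A digraph is given by a finite vertex set V (of naturals) and an edge set
E \<subseteq> V \<times> V without loops; using a set of ordered pairs gives at most one
edge in each direction between two vertices.\<close>

definition digraph :: "nat set \<Rightarrow> (nat \<times> nat) set \<Rightarrow> bool" where
  "digraph V E \<longleftrightarrow> finite V \<and> E \<subseteq> V \<times> V \<and> (\<forall>x. (x, x) \<notin> E)"

definition outdeg :: "(nat \<times> nat) set \<Rightarrow> nat set \<Rightarrow> nat \<Rightarrow> nat" where
  "outdeg E X x = card {y \<in> X. (x, y) \<in> E}"

definition indeg :: "(nat \<times> nat) set \<Rightarrow> nat set \<Rightarrow> nat \<Rightarrow> nat" where
  "indeg E X x = card {y \<in> X. (y, x) \<in> E}"

definition ecount :: "(nat \<times> nat) set \<Rightarrow> nat set \<Rightarrow> nat set \<Rightarrow> nat" where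
  "ecount E X Y = card (E \<inter> (X \<times> Y))"

definition semideg_ge :: "(nat \<times> nat) set \<Rightarrow> nat set \<Rightarrow> real \<Rightarrow> bool" where
  "semideg_ge E X c \<longleftrightarrow> (\<forall>x\<in>X. real (outdeg E X x) \<ge> c \<and> real (indeg E X x) \<ge> c)"

text \<open>delta^0(G[A,B]) \<ge> c, where G[A,B] has vertex set A \<union> B and edges E(A,B) \<union> E(B,A)
 (A, B disjoint).\<close>
definition bip_semideg_ge :: "(nat \<times> nat) set \<Rightarrow> nat set \<Rightarrow> nat set \<Rightarrow> real \<Rightarrow> bool" where
  "bip_semideg_ge E A B c \<longleftrightarrow>
     (\<forall>x\<in>A. real (outdeg E B x) \<ge> c \<and> real (indeg E B x) \<ge> c) \<and>
     (\<forall>x\<in>B. real (outdeg E A x) \<ge> c \<and> real (indeg E A x) \<ge> c)"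

definition partition4 :: "nat set \<Rightarrow> nat set \<Rightarrow> nat set \<Rightarrow> nat set \<Rightarrow> nat set \<Rightarrow> bool" where
  "partition4 V A B S T \<longleftrightarrow> A \<union> B \<union> S \<union> T = V \<and>
     A \<inter> B = {} \<and> A \<inter> S = {} \<and> A \<inter> T = {} \<and> B \<inter> S = {} \<and> B \<inter> T = {} \<and> S \<inter> T = {}"

definition extremal :: "real \<Rightarrow> nat set \<Rightarrow> (nat \<times> nat) set \<Rightarrow> bool" where
  "extremal \<epsilon> V E \<longleftrightarrow> (\<exists>A B S T. partition4 V A B S T \<and>
     \<bar>real (card A) - real (card B)\<bar> \<le> 1 \<and> \<bar>real (card S) - real (card T)\<bar> \<le> 1 \<and>
     real (ecount E (A \<union> S) (A \<union> T)) < \<epsilon> * (real (card V))\<^sup>2)"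

definition condP :: "real \<Rightarrow> real \<Rightarrow> nat set \<Rightarrow> (nat \<times> nat) set \<Rightarrow>
    nat set \<Rightarrow> nat set \<Rightarrow> nat set \<Rightarrow> nat set \<Rightarrow> bool" where
  "condP \<epsilon>\<^sub>3 \<eta>\<^sub>2 V E A B S T \<longleftrightarrow>
    (let n = real (card V); a = real (card A); b = real (card B);
         s = real (card S); t = real (card T) in
     \<comment> \<open>P1\<close>
     real_of_int \<lfloor>n/2\<rfloor> - \<epsilon>\<^sub>3*n \<le> s \<and> s \<le> real_of_int \<lceil>n/2\<rceil> + \<epsilon>\<^sub>3*n \<and>
     real_of_int \<lfloor>n/2\<rfloor> - \<epsilon>\<^sub>3*n \<le> t \<and> t \<le> real_of_int \<lceil>n/2\<rceil> + \<epsilon>\<^sub>3*n \<and>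
     \<comment> \<open>P2\<close>
     semideg_ge E S (\<eta>\<^sub>2*n) \<and> semideg_ge E T (\<eta>\<^sub>2*n) \<and>
     \<comment> \<open>P3\<close>
     real (card {x\<in>S. \<not> (real (outdeg E S x) \<ge> n/2 - \<epsilon>\<^sub>3*n \<and> real (indeg E S x) \<ge> n/2 - \<epsilon>\<^sub>3*n)})
        \<le> \<epsilon>\<^sub>3*n \<and>
     \<comment> \<open>P4\<close>
     real (card {x\<in>T. \<not> (real (outdeg E T x) \<ge> n/2 - \<epsilon>\<^sub>3*n \<and> real (indeg E T x) \<ge> n/2 - \<epsilon>\<^sub>3*n)})
        \<le> \<epsilon>\<^sub>3*n \<and>
     \<comment> \<open>P5\<close>
     a + b \<le> \<epsilon>\<^sub>3*n \<and>
     \<comment> \<open>P6\<close>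
     (\<forall>x\<in>A. real (indeg E T x) > n/2 - 3*\<eta>\<^sub>2*n \<and> real (outdeg E S x) > n/2 - 3*\<eta>\<^sub>2*n \<and>
            real (indeg E S x) \<le> 3*\<eta>\<^sub>2*n \<and> real (outdeg E T x) \<le> 3*\<eta>\<^sub>2*n) \<and>
     \<comment> \<open>P7\<close>
     (\<forall>x\<in>B. real (indeg E S x) > n/2 - 3*\<eta>\<^sub>2*n \<and> real (outdeg E T x) > n/2 - 3*\<eta>\<^sub>2*n \<and>
            real (indeg E T x) \<le> 3*\<eta>\<^sub>2*n \<and> real (outdeg E S x) \<le> 3*\<eta>\<^sub>2*n))"

definition condQ :: "real \<Rightarrow> nat set \<Rightarrow> (nat \<times> nat) set \<Rightarrow>
    nat set \<Rightarrow> nat set \<Rightarrow> nat set \<Rightarrow> nat set \<Rightarrow> bool" where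
  "condQ \<epsilon>\<^sub>3 V E A B S T \<longleftrightarrow>
    (let n = real (card V); a = real (card A); b = real (card B);
         s = real (card S); t = real (card T) in
     \<comment> \<open>Q1\<close>
     real_of_int \<lfloor>n/2\<rfloor> - \<epsilon>\<^sub>3*n \<le> a \<and> a \<le> real_of_int \<lceil>n/2\<rceil> + \<epsilon>\<^sub>3*n \<and>
     real_of_int \<lfloor>n/2\<rfloor> - \<epsilon>\<^sub>3*n \<le> b \<and> b \<le> real_of_int \<lceil>n/2\<rceil> + \<epsilon>\<^sub>3*n \<and>
     \<comment> \<open>Q2\<close>
     bip_semideg_ge E A B (n/50) \<and>
     \<comment> \<open>Q3\<close>
     real (card {x\<in>A. \<not> (real (outdeg E B x) \<ge> n/2 - \<epsilon>\<^sub>3*n \<and> real (indeg E B x) \<ge> n/2 - \<epsilon>\<^sub>3*n)})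
        \<le> \<epsilon>\<^sub>3*n \<and>
     \<comment> \<open>Q4\<close>
     real (card {x\<in>B. \<not> (real (outdeg E A x) \<ge> n/2 - \<epsilon>\<^sub>3*n \<and> real (indeg E A x) \<ge> n/2 - \<epsilon>\<^sub>3*n)})
        \<le> \<epsilon>\<^sub>3*n \<and>
     \<comment> \<open>Q5\<close>
     s + t \<le> \<epsilon>\<^sub>3*n \<and>
     \<comment> \<open>Q6\<close>
     (\<forall>x\<in>S. real (indeg E A x) \<ge> n/50 \<and> real (outdeg E B x) \<ge> n/50) \<and>
     \<comment> \<open>Q7\<close>
     (\<forall>x\<in>T. real (indeg E B x) \<ge> n/50 \<and> real (outdeg E A x) \<ge> n/50) \<and>
     \<comment> \<open>Q8\<close>
     (a < b \<longrightarrow>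
        (\<forall>x\<in>B. real (outdeg E B x) < n/20 \<and> real (indeg E B x) < n/20) \<and>
        (\<forall>x\<in>S. real (indeg E B x) < n/20) \<and>
        (\<forall>x\<in>T. real (outdeg E B x) < n/20)))"

definition condR :: "real \<Rightarrow> real \<Rightarrow> real \<Rightarrow> real \<Rightarrow> nat set \<Rightarrow> (nat \<times> nat) set \<Rightarrow>
    nat set \<Rightarrow> nat set \<Rightarrow> nat set \<Rightarrow> nat set \<Rightarrow> bool" where
  "condR \<epsilon> \<epsilon>\<^sub>1 \<eta>\<^sub>1 \<tau> V E A B S T \<longleftrightarrow>
    (let n = real (card V); a = real (card A); b = real (card B);
         s = real (card S); t = real (card T); r = \<epsilon> powr (1/3) * n in
     \<comment> \<open>R1\<close>
     a \<ge> \<tau>*n \<and> b \<ge> \<tau>*n \<and> s \<ge> \<tau>*n \<and> t \<ge> \<tau>*n \<and>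
     \<comment> \<open>R2\<close>
     \<bar>a - b\<bar> \<le> \<epsilon>\<^sub>1*n \<and> \<bar>s - t\<bar> \<le> \<epsilon>\<^sub>1*n \<and>
     \<comment> \<open>R3\<close>
     bip_semideg_ge E A B (\<eta>\<^sub>1*n) \<and>
     \<comment> \<open>R4\<close>
     (\<forall>x\<in>S. real (outdeg E (B \<union> S) x) \<ge> \<eta>\<^sub>1*n \<and> real (indeg E (A \<union> S) x) \<ge> \<eta>\<^sub>1*n) \<and>
     \<comment> \<open>R5\<close>
     (\<forall>x\<in>T. real (outdeg E (A \<union> T) x) \<ge> \<eta>\<^sub>1*n \<and> real (indeg E (B \<union> T) x) \<ge> \<eta>\<^sub>1*n) \<and>
     \<comment> \<open>R6\<close>
     real (card {x\<in>A. \<not> (real (outdeg E B x) \<ge> b - r \<and> real (indeg E B x) \<ge> b - r)}) \<le> \<epsilon>\<^sub>1*n \<and>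
     \<comment> \<open>R7\<close>
     real (card {x\<in>B. \<not> (real (outdeg E A x) \<ge> a - r \<and> real (indeg E A x) \<ge> a - r)}) \<le> \<epsilon>\<^sub>1*n \<and>
     \<comment> \<open>R8\<close>
     real (card {x\<in>S. \<not> (real (outdeg E (B \<union> S) x) \<ge> b + s - r \<and>
                           real (indeg E (A \<union> S) x) \<ge> a + s - r)}) \<le> \<epsilon>\<^sub>1*n \<and>
     \<comment> \<open>R9\<close>
     real (card {x\<in>T. \<not> (real (outdeg E (A \<union> T) x) \<ge> a + t - r \<and>
                           real (indeg E (B \<union> T) x) \<ge> b + t - r)}) \<le> \<epsilon>\<^sub>1*n)"

end

theory Submission
  imports Defs
begin

lemma outdeg_finite: "digraph V E \<Longrightarrow> finite {y\<in>X. (x, y) \<in> E}"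
  unfolding digraph_def
  by (rule finite_subset[of _ V]) auto

lemma indeg_finite: "digraph V E \<Longrightarrow> finite {y\<in>X. (y, x) \<in> E}"
  unfolding digraph_def
  by (rule finite_subset[of _ V]) auto

lemma outdeg_Un: "digraph V E \<Longrightarrow> X \<inter> Y = {} \<Longrightarrow>
   outdeg E (X \<union> Y) x = outdeg E X x + outdeg E Y x"
  unfolding outdeg_def
proof -
  assume d: "digraph V E" and xy: "X \<inter> Y = {}"
  have "{y \<in> X \<union> Y. (x, y) \<in> E} = {y\<in>X. (x, y) \<in> E} \<union> {y\<in>Y. (x, y) \<in> E}" by auto
  then show "card {y \<in> X \<union> Y. (x, y) \<in> E} = card {y \<in> X. (x, y) \<in> E} + card {y \<in> Y. (x, y) \<in> E}"
    using card_Un_disjoint[OF outdeg_finite[OF d, of X x] outdeg_finite[OF d, of Y x]] xy by auto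
qed

lemma indeg_Un: "digraph V E \<Longrightarrow> X \<inter> Y = {} \<Longrightarrow>
   indeg E (X \<union> Y) x = indeg E X x + indeg E Y x"
  unfolding indeg_def
proof -
  assume d: "digraph V E" and xy: "X \<inter> Y = {}"
  have "{y \<in> X \<union> Y. (y, x) \<in> E} = {y\<in>X. (y, x) \<in> E} \<union> {y\<in>Y. (y, x) \<in> E}" by auto
  then show "card {y \<in> X \<union> Y. (y, x) \<in> E} = card {y \<in> X. (y, x) \<in> E} + card {y \<in> Y. (y, x) \<in> E}"
    using card_Un_disjoint[OF indeg_finite[OF d, of X x] indeg_finite[OF d, of Y x]] xy by auto
qed

lemma outdeg_le: "finite X \<Longrightarrow> outdeg E X x \<le> card X"
  unfolding outdeg_def by (rule card_mono) auto

lemma indeg_le: "finite X \<Longrightarrow> indeg E X x \<le> card X"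
  unfolding indeg_def by (rule card_mono) auto

lemma outdeg_diff: "digraph V E \<Longrightarrow> finite X \<Longrightarrow> outdeg E X x \<le> outdeg E Y x + card (X - Y)"
  unfolding outdeg_def
proof -
  assume d: "digraph V E" and f: "finite X"
  have "card {y \<in> X. (x, y) \<in> E} \<le> card ({y \<in> Y. (x, y) \<in> E} \<union> (X - Y))"
    by (rule card_mono) (use outdeg_finite[OF d] f in auto)
  also have "\<dots> \<le> card {y \<in> Y. (x, y) \<in> E} + card (X - Y)" by (rule card_Un_le)
  finally show "card {y \<in> X. (x, y) \<in> E} \<le> card {y \<in> Y. (x, y) \<in> E} + card (X - Y)" .
qed

lemma indeg_diff: "digraph V E \<Longrightarrow> finite X \<Longrightarrow> indeg E X x \<le> indeg E Y x + card (X - Y)"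
  unfolding indeg_def
proof -
  assume d: "digraph V E" and f: "finite X"
  have "card {y \<in> X. (y, x) \<in> E} \<le> card ({y \<in> Y. (y, x) \<in> E} \<union> (X - Y))"
    by (rule card_mono) (use indeg_finite[OF d] f in auto)
  also have "\<dots> \<le> card {y \<in> Y. (y, x) \<in> E} + card (X - Y)" by (rule card_Un_le)
  finally show "card {y \<in> X. (y, x) \<in> E} \<le> card {y \<in> Y. (y, x) \<in> E} + card (X - Y)" .
qed

lemma double_count_out: "digraph V E \<Longrightarrow> finite X \<Longrightarrow>
   (\<Sum>x\<in>X. outdeg E Y x) = ecount E X Y"
proof -
  assume d: "digraph V E" and f: "finite X"
  have "E \<inter> (X \<times> Y) = (SIGMA x:X. {y\<in>Y. (x, y) \<in> E})" by auto
  then show ?thesis unfolding ecount_def outdeg_def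
    using card_SigmaI[OF f, of "\<lambda>x. {y\<in>Y. (x, y) \<in> E}"] outdeg_finite[OF d] by auto
qed

lemma double_count_in: "digraph V E \<Longrightarrow> finite Y \<Longrightarrow>
   (\<Sum>y\<in>Y. indeg E X y) = ecount E X Y"
proof -
  assume d: "digraph V E" and f: "finite Y"
  have "E \<inter> (X \<times> Y) = (\<lambda>(y,x). (x,y)) ` (SIGMA y:Y. {x\<in>X. (x, y) \<in> E})" by force
  moreover have "inj_on (\<lambda>(y,x). (x,y)) (SIGMA y:Y. {x\<in>X. (x, y) \<in> E})" by (auto simp: inj_on_def)
  ultimately have "card (E \<inter> (X \<times> Y)) = card (SIGMA y:Y. {x\<in>X. (x, y) \<in> E})"
    by (simp add: card_image)
  then show ?thesis unfolding ecount_def indeg_def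
    using card_SigmaI[OF f, of "\<lambda>y. {x\<in>X. (x, y) \<in> E}"] indeg_finite[OF d] by auto
qed

lemma count_big:
  fixes f :: "'a \<Rightarrow> real"
  assumes "finite X" "\<And>x. x \<in> X \<Longrightarrow> f x \<ge> 0" "(\<Sum>x\<in>X. f x) \<le> K" "k > 0"
  shows "real (card {x\<in>X. f x \<ge> k}) * k \<le> K"
proof -
  let ?W = "{x\<in>X. f x \<ge> k}"
  have "real (card ?W) * k = (\<Sum>x\<in>?W. k)" by simp
  also have "\<dots> \<le> (\<Sum>x\<in>?W. f x)" by (rule sum_mono) auto
  also have "\<dots> \<le> (\<Sum>x\<in>X. f x)" by (rule sum_mono2) (use assms in auto)
  finally show ?thesis using assms by linarith
qed

lemma card_bound_from:
  fixes c d N :: real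
  assumes "c * (k*d*N) \<le> k*(d*d)*(N*N)" "d > 0" "N > 0" "k > 0"
  shows "c \<le> d * N"
proof -
  have "c * (k*d*N) \<le> (d*N) * (k*d*N)" using assms(1) by (simp add: algebra_simps)
  moreover have "k*d*N > 0" using assms by simp
  ultimately show ?thesis using mult_le_cancel_right_pos by blast
qed

lemma good_set:
  fixes d eps :: real
  assumes dg: "digraph V E" and sd: "semideg_ge E V (real (card V) / 2)"
    and P0: "partition4 V A0 B0 S0 T0"
    and ab: "\<bar>real (card A0) - real (card B0)\<bar> \<le> 1" and st: "\<bar>real (card S0) - real (card T0)\<bar> \<le> 1"
    and ec: "real (ecount E (A0 \<union> S0) (A0 \<union> T0)) < eps * (real (card V))\<^sup>2"
    and dpos: "d > 0" and epsd: "eps = d * d" and epsN: "eps * real (card V) \<ge> 1"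
  shows "\<exists>Gd \<subseteq> V. real (card (V - Gd)) \<le> 4 * d * real (card V) \<and>
    (\<forall>x\<in>Gd.
      (x \<in> A0 \<union> S0 \<longrightarrow> real (outdeg E A0 x) + real (outdeg E T0 x) < d * real (card V)) \<and>
      (x \<in> A0 \<union> T0 \<longrightarrow> real (indeg E A0 x) + real (indeg E S0 x) < d * real (card V)) \<and>
      (x \<in> B0 \<union> T0 \<longrightarrow> real (outdeg E A0 x) + real (outdeg E T0 x) > real (card A0) + real (card T0) - 2 * d * real (card V)) \<and>
      (x \<in> B0 \<union> S0 \<longrightarrow> real (indeg E A0 x) + real (indeg E S0 x) > real (card A0) + real (card S0) - 2 * d * real (card V)))"
proof -
  define N where "N = real (card V)"
  define X where "X = A0 \<union> S0"
  define Y where "Y = A0 \<union> T0"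
  define Xc where "Xc = B0 \<union> T0"
  define Yc where "Yc = B0 \<union> S0"
  have fV: "finite V" using dg unfolding digraph_def by auto
  have sub: "A0 \<subseteq> V" "B0 \<subseteq> V" "S0 \<subseteq> V" "T0 \<subseteq> V" using P0 unfolding partition4_def by auto
  have fin: "finite A0" "finite B0" "finite S0" "finite T0" using sub fV by (auto intro: finite_subset)
  have dis: "A0 \<inter> B0 = {}" "A0 \<inter> S0 = {}" "A0 \<inter> T0 = {}" "B0 \<inter> S0 = {}" "B0 \<inter> T0 = {}" "S0 \<inter> T0 = {}"
    using P0 unfolding partition4_def by auto
  have Vun: "V = A0 \<union> B0 \<union> S0 \<union> T0" using P0 unfolding partition4_def by auto
  have cardV: "N = real (card A0) + real (card B0) + real (card S0) + real (card T0)"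
    unfolding N_def Vun using fin dis by (simp add: card_Un_disjoint Int_Un_distrib Int_Un_distrib2)
  have cX: "real (card X) = real (card A0) + real (card S0)" unfolding X_def using fin dis by (simp add: card_Un_disjoint)
  have cY: "real (card Y) = real (card A0) + real (card T0)" unfolding Y_def using fin dis by (simp add: card_Un_disjoint)
  have cXc: "real (card Xc) = real (card B0) + real (card T0)" unfolding Xc_def using fin dis by (simp add: card_Un_disjoint)
  have cYc: "real (card Yc) = real (card B0) + real (card S0)" unfolding Yc_def using fin dis by (simp add: card_Un_disjoint)
  have fX: "finite X" "finite Y" "finite Xc" "finite Yc" unfolding X_def Y_def Xc_def Yc_def using fin by auto
  have VX: "V = X \<union> Xc" "X \<inter> Xc = {}" unfolding X_def Xc_def using Vun dis by auto
  have VY: "V = Y \<union> Yc" "Y \<inter> Yc = {}" unfolding Y_def Yc_def using Vun dis by auto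
  have XV: "X \<subseteq> V" "Y \<subseteq> V" "Xc \<subseteq> V" "Yc \<subseteq> V" using VX VY by auto
  have Npos: "N > 0"
  proof -
    have "eps * N \<ge> 1" using epsN N_def by simp
    moreover have "N \<ge> 0" unfolding N_def by simp
    ultimately show ?thesis using dpos epsd by (cases "N = 0") auto
  qed
  have ecN: "real (ecount E X Y) < d*d*(N*N)" using ec epsd unfolding X_def Y_def N_def by (simp add: power2_eq_square)
  have NN: "N \<le> d*d*(N*N)"
  proof -
    have "1 * N \<le> (eps * N) * N" by (rule mult_right_mono) (use epsN Npos N_def in auto)
    then show ?thesis using epsd by (simp add: algebra_simps)
  qed
  have sdo: "\<And>x. x \<in> V \<Longrightarrow> real (outdeg E V x) \<ge> N/2" and sdi: "\<And>x. x \<in> V \<Longrightarrow> real (indeg E V x) \<ge> N/2"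
    using sd unfolding semideg_ge_def N_def by auto
  define B1 where "B1 = {x\<in>X. real (outdeg E Y x) \<ge> d*N}"
  have s1: "(\<Sum>x\<in>X. real (outdeg E Y x)) = real (ecount E X Y)"
    using double_count_out[OF dg fX(1), of Y] by (metis of_nat_sum)
  have "real (card B1) * (d*N) \<le> d*d*(N*N)"
    unfolding B1_def
    by (rule count_big[OF fX(1), of "\<lambda>x. real (outdeg E Y x)" "d*d*(N*N)" "d*N", simplified])
       (use s1 ecN dpos Npos in auto)
  then have cB1: "real (card B1) \<le> d*N" using card_bound_from[of "real (card B1)" 1 d N] dpos Npos by simp
  define B2 where "B2 = {y\<in>Y. real (indeg E X y) \<ge> d*N}"
  have s2: "(\<Sum>y\<in>Y. real (indeg E X y)) = real (ecount E X Y)"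
    using double_count_in[OF dg fX(2), of X] by (metis of_nat_sum)
  have "real (card B2) * (d*N) \<le> d*d*(N*N)"
    unfolding B2_def
    by (rule count_big[OF fX(2), of "\<lambda>x. real (indeg E X x)" "d*d*(N*N)" "d*N", simplified])
       (use s2 ecN dpos Npos in auto)
  then have cB2: "real (card B2) \<le> d*N" using card_bound_from[of "real (card B2)" 1 d N] dpos Npos by simp
  define B3 where "B3 = {x\<in>Xc. real (card Y) - real (outdeg E Y x) \<ge> 2*d*N}"
  have s3a: "(\<Sum>x\<in>Xc. real (outdeg E Y x)) = (\<Sum>y\<in>Y. real (indeg E Xc y))"
    using double_count_out[OF dg fX(3), of Y] double_count_in[OF dg fX(2), of Xc] by (metis of_nat_sum)
  have iy: "\<And>y. y \<in> Y \<Longrightarrow> real (indeg E Xc y) \<ge> N/2 - real (indeg E X y)"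
  proof -
    fix y assume "y \<in> Y"
    then have "real (indeg E V y) \<ge> N/2" using sdi XV by auto
    moreover have "indeg E V y = indeg E X y + indeg E Xc y" using indeg_Un[OF dg VX(2)] VX(1) by simp
    ultimately show "real (indeg E Xc y) \<ge> N/2 - real (indeg E X y)" by simp
  qed
  have "(\<Sum>y\<in>Y. real (indeg E Xc y)) \<ge> (\<Sum>y\<in>Y. N/2 - real (indeg E X y))"
    by (rule sum_mono) (use iy in auto)
  also have "(\<Sum>y\<in>Y. N/2 - real (indeg E X y)) = real (card Y) * (N/2) - real (ecount E X Y)"
    using s2 by (simp add: sum_subtractf)
  finally have s3b: "(\<Sum>x\<in>Xc. real (outdeg E Y x)) \<ge> real (card Y) * (N/2) - real (ecount E X Y)" using s3a by simp
  have s3: "(\<Sum>x\<in>Xc. real (card Y) - real (outdeg E Y x)) \<le> 2*d*d*(N*N)"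
  proof -
    have "(\<Sum>x\<in>Xc. real (card Y) - real (outdeg E Y x)) = real (card Xc) * real (card Y) - (\<Sum>x\<in>Xc. real (outdeg E Y x))"
      by (simp add: sum_subtractf)
    also have "\<dots> \<le> real (card Y) * (real (card Xc) - N/2) + d*d*(N*N)" using s3b ecN by (simp add: algebra_simps)
    also have "real (card Y) * (real (card Xc) - N/2) \<le> real (card Y) * 1"
    proof (rule mult_left_mono)
      show "real (card Xc) - N/2 \<le> 1" using cXc cardV ab st unfolding abs_le_iff by linarith
    qed simp
    also have "real (card Y) \<le> N" unfolding N_def using card_mono[OF fV XV(2)] by simp
    finally show ?thesis using NN by simp
  qed
  have "real (card B3) * (2*d*N) \<le> 2*d*d*(N*N)"
    unfolding B3_def
    by (rule count_big[OF fX(3), of "\<lambda>x. real (card Y) - real (outdeg E Y x)" "2*d*d*(N*N)" "2*d*N"])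
       (use s3 dpos Npos outdeg_le[OF fX(2)] in auto)
  then have cB3: "real (card B3) \<le> d*N" using card_bound_from[of "real (card B3)" 2 d N] dpos Npos by (simp add: algebra_simps)
  define B4 where "B4 = {y\<in>Yc. real (card X) - real (indeg E X y) \<ge> 2*d*N}"
  have s4a: "(\<Sum>y\<in>Yc. real (indeg E X y)) = (\<Sum>x\<in>X. real (outdeg E Yc x))"
    using double_count_out[OF dg fX(1), of Yc] double_count_in[OF dg fX(4), of X] by (metis of_nat_sum)
  have ox: "\<And>x. x \<in> X \<Longrightarrow> real (outdeg E Yc x) \<ge> N/2 - real (outdeg E Y x)"
  proof -
    fix x assume "x \<in> X"
    then have "real (outdeg E V x) \<ge> N/2" using sdo XV by auto
    moreover have "outdeg E V x = outdeg E Y x + outdeg E Yc x" using outdeg_Un[OF dg VY(2)] VY(1) by simp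
    ultimately show "real (outdeg E Yc x) \<ge> N/2 - real (outdeg E Y x)" by simp
  qed
  have "(\<Sum>x\<in>X. real (outdeg E Yc x)) \<ge> (\<Sum>x\<in>X. N/2 - real (outdeg E Y x))"
    by (rule sum_mono) (use ox in auto)
  also have "(\<Sum>x\<in>X. N/2 - real (outdeg E Y x)) = real (card X) * (N/2) - real (ecount E X Y)"
    using s1 by (simp add: sum_subtractf)
  finally have s4b: "(\<Sum>y\<in>Yc. real (indeg E X y)) \<ge> real (card X) * (N/2) - real (ecount E X Y)" using s4a by simp
  have s4: "(\<Sum>y\<in>Yc. real (card X) - real (indeg E X y)) \<le> 2*d*d*(N*N)"
  proof -
    have "(\<Sum>y\<in>Yc. real (card X) - real (indeg E X y)) = real (card Yc) * real (card X) - (\<Sum>y\<in>Yc. real (indeg E X y))"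
      by (simp add: sum_subtractf)
    also have "\<dots> \<le> real (card X) * (real (card Yc) - N/2) + d*d*(N*N)" using s4b ecN by (simp add: algebra_simps)
    also have "real (card X) * (real (card Yc) - N/2) \<le> real (card X) * 1"
    proof (rule mult_left_mono)
      show "real (card Yc) - N/2 \<le> 1" using cYc cardV ab st unfolding abs_le_iff by linarith
    qed simp
    also have "real (card X) \<le> N" unfolding N_def using card_mono[OF fV XV(1)] by simp
    finally show ?thesis using NN by simp
  qed
  have "real (card B4) * (2*d*N) \<le> 2*d*d*(N*N)"
    unfolding B4_def
    by (rule count_big[OF fX(4), of "\<lambda>x. real (card X) - real (indeg E X x)" "2*d*d*(N*N)" "2*d*N"])
       (use s4 dpos Npos indeg_le[OF fX(1)] in auto)
  then have cB4: "real (card B4) \<le> d*N" using card_bound_from[of "real (card B4)" 2 d N] dpos Npos by (simp add: algebra_simps)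
  define Gd where "Gd = V - (B1 \<union> B2 \<union> B3 \<union> B4)"
  have fB: "finite B1" "finite B2" "finite B3" "finite B4" unfolding B1_def B2_def B3_def B4_def using fX by auto
  have "V - Gd \<subseteq> B1 \<union> B2 \<union> B3 \<union> B4" unfolding Gd_def by auto
  then have "card (V - Gd) \<le> card (B1 \<union> B2 \<union> B3 \<union> B4)" using fB by (intro card_mono) auto
  also have "\<dots> \<le> card B1 + card B2 + card B3 + card B4"
    using card_Un_le[of "B1 \<union> B2 \<union> B3" B4] card_Un_le[of "B1 \<union> B2" B3] card_Un_le[of B1 B2] by linarith
  finally have cG: "real (card (V - Gd)) \<le> 4*d*N" using cB1 cB2 cB3 cB4 by linarith
  have oY: "\<And>x. outdeg E Y x = outdeg E A0 x + outdeg E T0 x" unfolding Y_def using outdeg_Un[OF dg dis(3)] by simp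
  have iX: "\<And>x. indeg E X x = indeg E A0 x + indeg E S0 x" unfolding X_def using indeg_Un[OF dg dis(2)] by simp
  show ?thesis
  proof (intro exI[of _ Gd] conjI ballI)
    show "Gd \<subseteq> V" unfolding Gd_def by auto
    show "real (card (V - Gd)) \<le> 4 * d * real (card V)" using cG N_def by simp
  next
    fix x assume x: "x \<in> Gd"
    show "x \<in> A0 \<union> S0 \<longrightarrow> real (outdeg E A0 x) + real (outdeg E T0 x) < d * real (card V)"
      using x oY[of x] unfolding Gd_def B1_def X_def N_def by auto
    show "x \<in> A0 \<union> T0 \<longrightarrow> real (indeg E A0 x) + real (indeg E S0 x) < d * real (card V)"
      using x iX[of x] unfolding Gd_def B2_def Y_def N_def by auto
    show "x \<in> B0 \<union> T0 \<longrightarrow> real (outdeg E A0 x) + real (outdeg E T0 x) > real (card A0) + real (card T0) - 2 * d * real (card V)"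
      using x oY[of x] cY unfolding Gd_def B3_def Xc_def N_def by auto
    show "x \<in> B0 \<union> S0 \<longrightarrow> real (indeg E A0 x) + real (indeg E S0 x) > real (card A0) + real (card S0) - 2 * d * real (card V)"
      using x iX[of x] cX unfolding Gd_def B4_def Yc_def N_def by auto
  qed
qed

definition mv :: "nat set \<Rightarrow> nat set \<Rightarrow> nat set \<Rightarrow> nat set \<Rightarrow> nat set \<Rightarrow> nat set \<Rightarrow> nat set \<Rightarrow> nat set \<Rightarrow> nat set \<Rightarrow> nat set" where
  "mv V A B S T A0 B0 S0 T0 = V - ((A \<inter> A0) \<union> (B \<inter> B0) \<union> (S \<inter> S0) \<union> (T \<inter> T0))"

lemma shift_pair:
  assumes dg: "digraph V E" and f: "finite C" "finite C0" "finite M" and s: "C - C0 \<subseteq> M" "C0 - C \<subseteq> M"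
  shows "real (outdeg E C x) \<ge> real (outdeg E C0 x) - real (card M)"
    and "real (outdeg E C x) \<le> real (outdeg E C0 x) + real (card M)"
    and "real (indeg E C x) \<ge> real (indeg E C0 x) - real (card M)"
    and "real (indeg E C x) \<le> real (indeg E C0 x) + real (card M)"
    and "real (card C) \<ge> real (card C0) - real (card M)"
    and "real (card C) \<le> real (card C0) + real (card M)"
proof -
  have c1: "card (C - C0) \<le> card M" "card (C0 - C) \<le> card M" using s f card_mono by auto
  have "outdeg E C0 x \<le> outdeg E C x + card (C0 - C)" by (rule outdeg_diff[OF dg f(2)])
  then show "real (outdeg E C x) \<ge> real (outdeg E C0 x) - real (card M)" using c1 by linarith
  have "outdeg E C x \<le> outdeg E C0 x + card (C - C0)" by (rule outdeg_diff[OF dg f(1)])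
  then show "real (outdeg E C x) \<le> real (outdeg E C0 x) + real (card M)" using c1 by linarith
  have "indeg E C0 x \<le> indeg E C x + card (C0 - C)" by (rule indeg_diff[OF dg f(2)])
  then show "real (indeg E C x) \<ge> real (indeg E C0 x) - real (card M)" using c1 by linarith
  have "indeg E C x \<le> indeg E C0 x + card (C - C0)" by (rule indeg_diff[OF dg f(1)])
  then show "real (indeg E C x) \<le> real (indeg E C0 x) + real (card M)" using c1 by linarith
  have "card C0 \<le> card (C0 \<inter> C) + card (C0 - C)" using f card_Un_le[of "C0 \<inter> C" "C0 - C"]
    by (metis Int_Diff_Un)
  moreover have "card (C0 \<inter> C) \<le> card C" using f by (intro card_mono) auto
  ultimately show "real (card C) \<ge> real (card C0) - real (card M)" using c1 by linarith
  have "card C \<le> card (C \<inter> C0) + card (C - C0)" using f card_Un_le[of "C \<inter> C0" "C - C0"]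
    by (metis Int_Diff_Un)
  moreover have "card (C \<inter> C0) \<le> card C0" using f by (intro card_mono) auto
  ultimately show "real (card C) \<le> real (card C0) + real (card M)" using c1 by linarith
qed

lemma mv_sub:
  assumes P: "partition4 V A B S T" and P0: "partition4 V A0 B0 S0 T0" and M: "M = mv V A B S T A0 B0 S0 T0"
  shows "A - A0 \<subseteq> M" "A0 - A \<subseteq> M" "B - B0 \<subseteq> M" "B0 - B \<subseteq> M"
        "S - S0 \<subseteq> M" "S0 - S \<subseteq> M" "T - T0 \<subseteq> M" "T0 - T \<subseteq> M"
  using P P0 unfolding M mv_def partition4_def by auto

lemma shift_all:
  assumes dg: "digraph V E" and P: "partition4 V A B S T" and P0: "partition4 V A0 B0 S0 T0"
    and M: "M = mv V A B S T A0 B0 S0 T0"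
  shows "real (outdeg E A x) \<ge> real (outdeg E A0 x) - real (card M)"
    and "real (outdeg E A x) \<le> real (outdeg E A0 x) + real (card M)"
    and "real (indeg E A x) \<ge> real (indeg E A0 x) - real (card M)"
    and "real (indeg E A x) \<le> real (indeg E A0 x) + real (card M)"
    and "real (card A) \<ge> real (card A0) - real (card M)"
    and "real (card A) \<le> real (card A0) + real (card M)"
    and "real (outdeg E B x) \<ge> real (outdeg E B0 x) - real (card M)"
    and "real (outdeg E B x) \<le> real (outdeg E B0 x) + real (card M)"
    and "real (indeg E B x) \<ge> real (indeg E B0 x) - real (card M)"
    and "real (indeg E B x) \<le> real (indeg E B0 x) + real (card M)"
    and "real (card B) \<ge> real (card B0) - real (card M)"
    and "real (card B) \<le> real (card B0) + real (card M)"
    and "real (outdeg E S x) \<ge> real (outdeg E S0 x) - real (card M)"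
    and "real (outdeg E S x) \<le> real (outdeg E S0 x) + real (card M)"
    and "real (indeg E S x) \<ge> real (indeg E S0 x) - real (card M)"
    and "real (indeg E S x) \<le> real (indeg E S0 x) + real (card M)"
    and "real (card S) \<ge> real (card S0) - real (card M)"
    and "real (card S) \<le> real (card S0) + real (card M)"
    and "real (outdeg E T x) \<ge> real (outdeg E T0 x) - real (card M)"
    and "real (outdeg E T x) \<le> real (outdeg E T0 x) + real (card M)"
    and "real (indeg E T x) \<ge> real (indeg E T0 x) - real (card M)"
    and "real (indeg E T x) \<le> real (indeg E T0 x) + real (card M)"
    and "real (card T) \<ge> real (card T0) - real (card M)"
    and "real (card T) \<le> real (card T0) + real (card M)"
proof -
  have fV: "finite V" using dg unfolding digraph_def by auto
  have sub: "A \<subseteq> V" "B \<subseteq> V" "S \<subseteq> V" "T \<subseteq> V" "A0 \<subseteq> V" "B0 \<subseteq> V" "S0 \<subseteq> V" "T0 \<subseteq> V"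
    using P P0 unfolding partition4_def by auto
  have f: "finite A" "finite B" "finite S" "finite T" "finite A0" "finite B0" "finite S0" "finite T0"
    using sub fV by (auto intro: finite_subset)
  have fM: "finite M" unfolding M mv_def using fV by auto
  note ms = mv_sub[OF P P0 M]
  note pA = shift_pair[OF dg f(1) f(5) fM ms(1) ms(2)]
  note pB = shift_pair[OF dg f(2) f(6) fM ms(3) ms(4)]
  note pS = shift_pair[OF dg f(3) f(7) fM ms(5) ms(6)]
  note pT = shift_pair[OF dg f(4) f(8) fM ms(7) ms(8)]
  show "real (outdeg E A x) \<ge> real (outdeg E A0 x) - real (card M)"
    and "real (outdeg E A x) \<le> real (outdeg E A0 x) + real (card M)"
    and "real (indeg E A x) \<ge> real (indeg E A0 x) - real (card M)"
    and "real (indeg E A x) \<le> real (indeg E A0 x) + real (card M)"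
    and "real (card A) \<ge> real (card A0) - real (card M)"
    and "real (card A) \<le> real (card A0) + real (card M)"
    and "real (outdeg E B x) \<ge> real (outdeg E B0 x) - real (card M)"
    and "real (outdeg E B x) \<le> real (outdeg E B0 x) + real (card M)"
    and "real (indeg E B x) \<ge> real (indeg E B0 x) - real (card M)"
    and "real (indeg E B x) \<le> real (indeg E B0 x) + real (card M)"
    and "real (card B) \<ge> real (card B0) - real (card M)"
    and "real (card B) \<le> real (card B0) + real (card M)"
    and "real (outdeg E S x) \<ge> real (outdeg E S0 x) - real (card M)"
    and "real (outdeg E S x) \<le> real (outdeg E S0 x) + real (card M)"
    and "real (indeg E S x) \<ge> real (indeg E S0 x) - real (card M)"
    and "real (indeg E S x) \<le> real (indeg E S0 x) + real (card M)"
    and "real (card S) \<ge> real (card S0) - real (card M)"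
    and "real (card S) \<le> real (card S0) + real (card M)"
    and "real (outdeg E T x) \<ge> real (outdeg E T0 x) - real (card M)"
    and "real (outdeg E T x) \<le> real (outdeg E T0 x) + real (card M)"
    and "real (indeg E T x) \<ge> real (indeg E T0 x) - real (card M)"
    and "real (indeg E T x) \<le> real (indeg E T0 x) + real (card M)"
    and "real (card T) \<ge> real (card T0) - real (card M)"
    and "real (card T) \<le> real (card T0) + real (card M)"
    apply (rule pA(1))
    apply (rule pA(2))
    apply (rule pA(3))
    apply (rule pA(4))
    apply (rule pA(5))
    apply (rule pA(6))
    apply (rule pB(1))
    apply (rule pB(2))
    apply (rule pB(3))
    apply (rule pB(4))
    apply (rule pB(5))
    apply (rule pB(6))
    apply (rule pS(1))
    apply (rule pS(2))
    apply (rule pS(3))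
    apply (rule pS(4))
    apply (rule pS(5))
    apply (rule pS(6))
    apply (rule pT(1))
    apply (rule pT(2))
    apply (rule pT(3))
    apply (rule pT(4))
    apply (rule pT(5))
    apply (rule pT(6))
    done
qed

locale ext0 =
  fixes V :: "nat set" and E :: "(nat \<times> nat) set" and A0 B0 S0 T0 Gd :: "nat set" and d :: real
  assumes dg: "digraph V E" and sd: "semideg_ge E V (real (card V) / 2)"
    and P0: "partition4 V A0 B0 S0 T0"
    and ab: "\<bar>real (card A0) - real (card B0)\<bar> \<le> 1" and st: "\<bar>real (card S0) - real (card T0)\<bar> \<le> 1"
    and GdV: "Gd \<subseteq> V" and cbad: "real (card (V - Gd)) \<le> 4 * d * real (card V)"
    and gd: "\<forall>x\<in>Gd.
      (x \<in> A0 \<union> S0 \<longrightarrow> real (outdeg E A0 x) + real (outdeg E T0 x) < d * real (card V)) \<and>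
      (x \<in> A0 \<union> T0 \<longrightarrow> real (indeg E A0 x) + real (indeg E S0 x) < d * real (card V)) \<and>
      (x \<in> B0 \<union> T0 \<longrightarrow> real (outdeg E A0 x) + real (outdeg E T0 x) > real (card A0) + real (card T0) - 2 * d * real (card V)) \<and>
      (x \<in> B0 \<union> S0 \<longrightarrow> real (indeg E A0 x) + real (indeg E S0 x) > real (card A0) + real (card S0) - 2 * d * real (card V))"
    and dpos: "d > 0" and dN: "d * real (card V) \<ge> 1"
begin

abbreviation "N \<equiv> real (card V)"
abbreviation "a0 \<equiv> real (card A0)"
abbreviation "b0 \<equiv> real (card B0)"
abbreviation "s0 \<equiv> real (card S0)"
abbreviation "t0 \<equiv> real (card T0)"

lemma fV: "finite V" using dg unfolding digraph_def by auto
lemma sub0: "A0 \<subseteq> V" "B0 \<subseteq> V" "S0 \<subseteq> V" "T0 \<subseteq> V" using P0 unfolding partition4_def by auto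
lemma fin0: "finite A0" "finite B0" "finite S0" "finite T0" using sub0 fV by (auto intro: finite_subset)
lemma dis0: "A0 \<inter> B0 = {}" "A0 \<inter> S0 = {}" "A0 \<inter> T0 = {}" "B0 \<inter> S0 = {}" "B0 \<inter> T0 = {}" "S0 \<inter> T0 = {}"
    using P0 unfolding partition4_def by auto
lemma Vun: "V = A0 \<union> B0 \<union> S0 \<union> T0" using P0 unfolding partition4_def by auto

lemma Npos: "N > 0"
proof -
  have "N \<noteq> 0"
  proof
    assume "N = 0" then show False using dN by simp
  qed
  moreover have "N \<ge> 0" by simp
  ultimately show ?thesis by linarith
qed

lemma sizes: "N = a0 + b0 + s0 + t0" "a0 - b0 \<le> 1" "b0 - a0 \<le> 1" "s0 - t0 \<le> 1" "t0 - s0 \<le> 1"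
proof -
  show "N = a0 + b0 + s0 + t0"
    using Vun fin0 dis0 by (simp add: card_Un_disjoint Int_Un_distrib Int_Un_distrib2)
  show "a0 - b0 \<le> 1" "b0 - a0 \<le> 1" "s0 - t0 \<le> 1" "t0 - s0 \<le> 1" using ab st by auto
qed

lemma vtx:
  assumes x: "x \<in> V"
  shows "real (outdeg E A0 x) + real (outdeg E B0 x) + real (outdeg E S0 x) + real (outdeg E T0 x) \<ge> N/2"
    and "real (indeg E A0 x) + real (indeg E B0 x) + real (indeg E S0 x) + real (indeg E T0 x) \<ge> N/2"
    and "real (outdeg E A0 x) \<le> a0" "real (outdeg E B0 x) \<le> b0" "real (outdeg E S0 x) \<le> s0" "real (outdeg E T0 x) \<le> t0"
    and "real (indeg E A0 x) \<le> a0" "real (indeg E B0 x) \<le> b0" "real (indeg E S0 x) \<le> s0" "real (indeg E T0 x) \<le> t0"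
proof -
  have d1: "(A0 \<union> B0) \<inter> S0 = {}" "(A0 \<union> B0 \<union> S0) \<inter> T0 = {}" using dis0 by auto
  have "outdeg E V x = outdeg E A0 x + outdeg E B0 x + outdeg E S0 x + outdeg E T0 x"
    using outdeg_Un[OF dg d1(2)] outdeg_Un[OF dg d1(1)] outdeg_Un[OF dg dis0(1)] Vun by simp
  moreover have "real (outdeg E V x) \<ge> N/2" using sd x unfolding semideg_ge_def by auto
  ultimately show "real (outdeg E A0 x) + real (outdeg E B0 x) + real (outdeg E S0 x) + real (outdeg E T0 x) \<ge> N/2"
    by simp
  have "indeg E V x = indeg E A0 x + indeg E B0 x + indeg E S0 x + indeg E T0 x"
    using indeg_Un[OF dg d1(2)] indeg_Un[OF dg d1(1)] indeg_Un[OF dg dis0(1)] Vun by simp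
  moreover have "real (indeg E V x) \<ge> N/2" using sd x unfolding semideg_ge_def by auto
  ultimately show "real (indeg E A0 x) + real (indeg E B0 x) + real (indeg E S0 x) + real (indeg E T0 x) \<ge> N/2"
    by simp
  show "real (outdeg E A0 x) \<le> a0" "real (outdeg E B0 x) \<le> b0" "real (outdeg E S0 x) \<le> s0" "real (outdeg E T0 x) \<le> t0"
    using outdeg_le fin0 by auto
  show "real (indeg E A0 x) \<le> a0" "real (indeg E B0 x) \<le> b0" "real (indeg E S0 x) \<le> s0" "real (indeg E T0 x) \<le> t0"
    using indeg_le fin0 by auto
qed

lemma good:
  assumes "x \<in> Gd"
  shows "x \<in> A0 \<union> S0 \<Longrightarrow> real (outdeg E A0 x) + real (outdeg E T0 x) < d * N"
    and "x \<in> A0 \<union> T0 \<Longrightarrow> real (indeg E A0 x) + real (indeg E S0 x) < d * N"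
    and "x \<in> B0 \<union> T0 \<Longrightarrow> real (outdeg E A0 x) + real (outdeg E T0 x) > a0 + t0 - 2 * d * N"
    and "x \<in> B0 \<union> S0 \<Longrightarrow> real (indeg E A0 x) + real (indeg E S0 x) > a0 + s0 - 2 * d * N"
  using gd assms by auto

lemma card_moved:
  assumes "M \<subseteq> V - Gd" shows "real (card M) \<le> 4 * d * N"
proof -
  have "card M \<le> card (V - Gd)" using assms fV by (intro card_mono) auto
  then show ?thesis using cbad by linarith
qed

end

context ext0
begin

lemma caseR:
  fixes eps eps1 eta1 tau :: real
  assumes ca: "2*tau*N \<le> a0" and cs: "2*tau*N \<le> s0"
    and cr: "20*d \<le> eps powr (1/3)" and c1: "10*d \<le> eps1" and c2: "10*d \<le> eta1"
    and c3: "100*eta1 \<le> tau" and c4: "tau \<le> 1/100"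
  shows "\<exists>A B S T. partition4 V A B S T \<and> condR eps eps1 eta1 tau V E A B S T"
proof -
  define r where "r = eps powr (1/3)"
  have N0: "N \<ge> 0" by simp
  have pN: "20*(d*N) \<le> r*N" "10*(d*N) \<le> eps1*N" "10*(d*N) \<le> eta1*N" "100*(eta1*N) \<le> tau*N" "tau*N \<le> N/100"
    using mult_right_mono[OF cr N0] mult_right_mono[OF c1 N0] mult_right_mono[OF c2 N0]
      mult_right_mono[OF c3 N0] mult_right_mono[OF c4 N0] unfolding r_def by (auto simp: algebra_simps)
  note sz = sizes dN
  define th where "th = 2*eta1*N"
  define rS where "rS x \<longleftrightarrow> real (outdeg E B0 x) + real (outdeg E S0 x) \<ge> th \<and> real (indeg E A0 x) + real (indeg E S0 x) \<ge> th" for x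
  define rT where "rT x \<longleftrightarrow> real (outdeg E A0 x) + real (outdeg E T0 x) \<ge> th \<and> real (indeg E B0 x) + real (indeg E T0 x) \<ge> th" for x
  define rA where "rA x \<longleftrightarrow> real (outdeg E B0 x) \<ge> th \<and> real (indeg E B0 x) \<ge> th" for x
  define A where "A = {x\<in>V. if x \<in> Gd then x \<in> A0 else (\<not> rS x \<and> \<not> rT x \<and> rA x)}"
  define B where "B = {x\<in>V. if x \<in> Gd then x \<in> B0 else (\<not> rS x \<and> \<not> rT x \<and> \<not> rA x)}"
  define S where "S = {x\<in>V. if x \<in> Gd then x \<in> S0 else rS x}"
  define T where "T = {x\<in>V. if x \<in> Gd then x \<in> T0 else (\<not> rS x \<and> rT x)}"
  have part: "partition4 V A B S T"
    unfolding partition4_def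
  proof (intro conjI)
    show "A \<union> B \<union> S \<union> T = V" unfolding A_def B_def S_def T_def using Vun by auto
    show "A \<inter> B = {}" unfolding A_def B_def using dis0 by auto
    show "A \<inter> S = {}" unfolding A_def S_def using dis0 by auto
    show "A \<inter> T = {}" unfolding A_def T_def using dis0 by auto
    show "B \<inter> S = {}" unfolding B_def S_def using dis0 by auto
    show "B \<inter> T = {}" unfolding B_def T_def using dis0 by auto
    show "S \<inter> T = {}" unfolding S_def T_def using dis0 by auto
  qed
  have disn: "B \<inter> S = {}" "A \<inter> S = {}" "A \<inter> T = {}" "B \<inter> T = {}" using part unfolding partition4_def by auto
  define M where "M = mv V A B S T A0 B0 S0 T0"
  have MG: "M \<subseteq> V - Gd" unfolding M_def mv_def A_def B_def S_def T_def using Vun by auto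
  have m: "real (card M) \<le> 4*d*N" by (rule card_moved[OF MG])
  note sh = shift_all[OF dg part P0 M_def]
  have uBS: "\<And>x. real (outdeg E (B \<union> S) x) = real (outdeg E B x) + real (outdeg E S x)"
    using outdeg_Un[OF dg disn(1)] by simp
  have uAS: "\<And>x. real (indeg E (A \<union> S) x) = real (indeg E A x) + real (indeg E S x)"
    using indeg_Un[OF dg disn(2)] by simp
  have uAT: "\<And>x. real (outdeg E (A \<union> T) x) = real (outdeg E A x) + real (outdeg E T x)"
    using outdeg_Un[OF dg disn(3)] by simp
  have uBT: "\<And>x. real (indeg E (B \<union> T) x) = real (indeg E B x) + real (indeg E T x)"
    using indeg_Un[OF dg disn(4)] by simp
  have s0le: "s0 \<le> N/2 + 1 - a0" "t0 \<le> N/2 + 1 - a0" "b0 \<ge> a0 - 1" "t0 \<ge> s0 - 1"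
    "N/2 - s0 \<ge> b0 - 1" "N/2 - t0 \<ge> b0 - 1" "b0 + s0 \<le> N/2 + 1" "b0 + t0 \<le> N/2 + 1"
    using sizes by linarith+
  have v1: "\<And>x. x \<in> V \<Longrightarrow> real (outdeg E A0 x) + real (outdeg E B0 x) + real (outdeg E S0 x) + real (outdeg E T0 x) \<ge> N/2"
    using vtx(1) by blast
  have v2: "\<And>x. x \<in> V \<Longrightarrow> real (indeg E A0 x) + real (indeg E B0 x) + real (indeg E S0 x) + real (indeg E T0 x) \<ge> N/2"
    using vtx(2) by blast
  have ruleB: "real (outdeg E A0 x) \<ge> th \<and> real (indeg E A0 x) \<ge> th"
    if xV: "x \<in> V" and n1: "\<not> rS x" and n2: "\<not> rT x" and n3: "\<not> rA x" for x
  proof -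
    note v = vtx[OF xV]
    have thN: "4*th \<le> N" "4*th + 1 \<le> a0" using pN dN ca unfolding th_def by linarith+
    have h1: "real (outdeg E B0 x) + real (outdeg E S0 x) < th"
    proof (rule ccontr)
      assume "\<not> ?thesis"
      then have a1: "real (outdeg E B0 x) + real (outdeg E S0 x) \<ge> th" by simp
      then have i1: "real (indeg E A0 x) + real (indeg E S0 x) < th" using n1 unfolding rS_def by auto
      then have "real (indeg E B0 x) + real (indeg E T0 x) \<ge> th" using v(2) thN by linarith
      then have "real (outdeg E A0 x) + real (outdeg E T0 x) < th" using n2 unfolding rT_def by auto
      then have "real (outdeg E B0 x) \<ge> th" using v(1) v(5) s0le(1) thN by linarith
      moreover have "real (indeg E B0 x) \<ge> th" using v(2) v(10) s0le(2) thN i1 by linarith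
      ultimately show False using n3 unfolding rA_def by auto
    qed
    then have "real (outdeg E A0 x) + real (outdeg E T0 x) \<ge> th" using v(1) thN by linarith
    then have h2: "real (indeg E B0 x) + real (indeg E T0 x) < th" using n2 unfolding rT_def by auto
    have "real (outdeg E A0 x) \<ge> th" using h1 v(1) v(6) s0le(2) thN by linarith
    moreover have "real (indeg E A0 x) \<ge> th" using h2 v(2) v(9) s0le(1) thN by linarith
    ultimately show ?thesis by simp
  qed
  show ?thesis
  proof (intro exI conjI)
    show "partition4 V A B S T" by (rule part)
    show "condR eps eps1 eta1 tau V E A B S T"
      unfolding condR_def Let_def r_def[symmetric]
    proof (intro conjI)
      show "real (card A) \<ge> tau * N" using sh(5) m ca pN(3) pN(4) by linarith
      show "real (card B) \<ge> tau * N" using sh(11) m ca pN(3) pN(4) s0le(3) dN by linarith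
      show "real (card S) \<ge> tau * N" using sh(17) m cs pN(3) pN(4) by linarith
      show "real (card T) \<ge> tau * N" using sh(23) m cs pN(3) pN(4) s0le(4) dN by linarith
      show "\<bar>real (card A) - real (card B)\<bar> \<le> eps1 * N"
        using sh(5) sh(6) sh(11) sh(12) m pN(2) sizes(2) sizes(3) dN unfolding abs_le_iff by (intro conjI; linarith)
      show "\<bar>real (card S) - real (card T)\<bar> \<le> eps1 * N"
        using sh(17) sh(18) sh(23) sh(24) m pN(2) sizes(4) sizes(5) dN unfolding abs_le_iff by (intro conjI; linarith)
      show "bip_semideg_ge E A B (eta1 * N)"
        unfolding bip_semideg_ge_def
      proof (intro conjI ballI)
        fix x assume "x \<in> A"
        then have xV: "x \<in> V" and cx: "(x \<in> Gd \<and> x \<in> A0) \<or> (x \<notin> Gd \<and> rA x)" unfolding A_def by (auto split: if_splits)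
        note v = vtx[OF xV]
        have "real (outdeg E B0 x) \<ge> 2*eta1*N \<and> real (indeg E B0 x) \<ge> 2*eta1*N"
          using cx
        proof (elim disjE conjE)
          assume g: "x \<in> Gd" and a: "x \<in> A0"
          have "real (outdeg E A0 x) + real (outdeg E T0 x) < d*N" using good(1)[OF g] a by auto
          moreover have "real (indeg E A0 x) + real (indeg E S0 x) < d*N" using good(2)[OF g] a by auto
          ultimately show ?thesis using v(1) v(5) v(2) v(10) s0le(1) s0le(2) ca pN(3) pN(4) dN by (intro conjI; linarith)
        next
          assume "x \<notin> Gd" "rA x" then show ?thesis unfolding rA_def th_def by auto
        qed
        then show "real (outdeg E B x) \<ge> eta1 * N" "real (indeg E B x) \<ge> eta1 * N"
          using sh(7)[of x] sh(9)[of x] m pN(3) by linarith+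
      next
        fix x assume "x \<in> B"
        then have xV: "x \<in> V" and cx: "(x \<in> Gd \<and> x \<in> B0) \<or> (x \<notin> Gd \<and> \<not> rS x \<and> \<not> rT x \<and> \<not> rA x)" unfolding B_def by (auto split: if_splits)
        note v = vtx[OF xV]
        have "real (outdeg E A0 x) \<ge> 2*eta1*N \<and> real (indeg E A0 x) \<ge> 2*eta1*N"
          using cx
        proof (elim disjE conjE)
          assume g: "x \<in> Gd" and a: "x \<in> B0"
          have "real (outdeg E A0 x) + real (outdeg E T0 x) > a0 + t0 - 2*d*N" using good(3)[OF g] a by auto
          moreover have "real (indeg E A0 x) + real (indeg E S0 x) > a0 + s0 - 2*d*N" using good(4)[OF g] a by auto
          ultimately show ?thesis using v(6) v(9) ca pN(3) pN(4) by (intro conjI; linarith)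
        next
          assume "x \<notin> Gd" "\<not> rS x" "\<not> rT x" "\<not> rA x"
          then show ?thesis using ruleB[OF xV] unfolding th_def by auto
        qed
        then show "real (outdeg E A x) \<ge> eta1 * N" "real (indeg E A x) \<ge> eta1 * N"
          using sh(1)[of x] sh(3)[of x] m pN(3) by linarith+
      qed
      show "\<forall>x\<in>S. real (outdeg E (B \<union> S) x) \<ge> eta1 * N \<and> real (indeg E (A \<union> S) x) \<ge> eta1 * N"
      proof
        fix x assume "x \<in> S"
        then have xV: "x \<in> V" and cx: "(x \<in> Gd \<and> x \<in> S0) \<or> (x \<notin> Gd \<and> rS x)" unfolding S_def by (auto split: if_splits)
        note v = vtx[OF xV]
        have "real (outdeg E B0 x) + real (outdeg E S0 x) \<ge> 2*eta1*N \<and> real (indeg E A0 x) + real (indeg E S0 x) \<ge> 2*eta1*N"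
          using cx
        proof (elim disjE conjE)
          assume g: "x \<in> Gd" and a: "x \<in> S0"
          have "real (outdeg E A0 x) + real (outdeg E T0 x) < d*N" using good(1)[OF g] a by auto
          moreover have "real (indeg E A0 x) + real (indeg E S0 x) > a0 + s0 - 2*d*N" using good(4)[OF g] a by auto
          ultimately show ?thesis using v(1) ca pN(3) pN(4) pN(5) by (intro conjI; linarith)
        next
          assume "x \<notin> Gd" "rS x" then show ?thesis unfolding rS_def th_def by auto
        qed
        then show "real (outdeg E (B \<union> S) x) \<ge> eta1 * N \<and> real (indeg E (A \<union> S) x) \<ge> eta1 * N"
          using sh(7)[of x] sh(13)[of x] sh(3)[of x] sh(15)[of x] m pN(3) uBS[of x] uAS[of x] by (intro conjI; linarith)
      qed
      show "\<forall>x\<in>T. real (outdeg E (A \<union> T) x) \<ge> eta1 * N \<and> real (indeg E (B \<union> T) x) \<ge> eta1 * N"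
      proof
        fix x assume "x \<in> T"
        then have xV: "x \<in> V" and cx: "(x \<in> Gd \<and> x \<in> T0) \<or> (x \<notin> Gd \<and> rT x)" unfolding T_def by (auto split: if_splits)
        note v = vtx[OF xV]
        have "real (outdeg E A0 x) + real (outdeg E T0 x) \<ge> 2*eta1*N \<and> real (indeg E B0 x) + real (indeg E T0 x) \<ge> 2*eta1*N"
          using cx
        proof (elim disjE conjE)
          assume g: "x \<in> Gd" and a: "x \<in> T0"
          have "real (outdeg E A0 x) + real (outdeg E T0 x) > a0 + t0 - 2*d*N" using good(3)[OF g] a by auto
          moreover have "real (indeg E A0 x) + real (indeg E S0 x) < d*N" using good(2)[OF g] a by auto
          ultimately show ?thesis using v(2) ca pN(3) pN(4) pN(5) by (intro conjI; linarith)
        next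
          assume "x \<notin> Gd" "rT x" then show ?thesis unfolding rT_def th_def by auto
        qed
        then show "real (outdeg E (A \<union> T) x) \<ge> eta1 * N \<and> real (indeg E (B \<union> T) x) \<ge> eta1 * N"
          using sh(1)[of x] sh(19)[of x] sh(9)[of x] sh(21)[of x] m pN(3) uAT[of x] uBT[of x] by (intro conjI; linarith)
      qed
      show "real (card {x\<in>A. \<not> (real (outdeg E B x) \<ge> real (card B) - r * N \<and> real (indeg E B x) \<ge> real (card B) - r * N)}) \<le> eps1 * N"
      proof -
        have sub: "{x\<in>A. \<not> (real (outdeg E B x) \<ge> real (card B) - r * N \<and> real (indeg E B x) \<ge> real (card B) - r * N)} \<subseteq> V - Gd"
        proof
          fix x assume xa: "x \<in> {x\<in>A. \<not> (real (outdeg E B x) \<ge> real (card B) - r * N \<and> real (indeg E B x) \<ge> real (card B) - r * N)}"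
          then have xV: "x \<in> V" unfolding A_def by (auto split: if_splits)
          show "x \<in> V - Gd"
          proof (rule ccontr)
            assume "x \<notin> V - Gd"
            then have g: "x \<in> Gd" and a: "x \<in> A0" using xa xV unfolding A_def by (auto split: if_splits)
            have "real (outdeg E A0 x) + real (outdeg E T0 x) < d*N" using good(1)[OF g] a by auto
            moreover have "real (indeg E A0 x) + real (indeg E S0 x) < d*N" using good(2)[OF g] a by auto
            ultimately have "real (outdeg E B x) \<ge> real (card B) - r * N \<and> real (indeg E B x) \<ge> real (card B) - r * N"
              using v1[OF xV] vtx(5)[OF xV] v2[OF xV] vtx(10)[OF xV] s0le(5) s0le(6) pN(1) dN m sh(7)[of x] sh(9)[of x] sh(12) by (intro conjI; linarith)
            then show False using xa by auto
          qed
        qed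
        show ?thesis using card_moved[OF sub] pN(2) dN by linarith
      qed
      show "real (card {x\<in>B. \<not> (real (outdeg E A x) \<ge> real (card A) - r * N \<and> real (indeg E A x) \<ge> real (card A) - r * N)}) \<le> eps1 * N"
      proof -
        have sub: "{x\<in>B. \<not> (real (outdeg E A x) \<ge> real (card A) - r * N \<and> real (indeg E A x) \<ge> real (card A) - r * N)} \<subseteq> V - Gd"
        proof
          fix x assume xa: "x \<in> {x\<in>B. \<not> (real (outdeg E A x) \<ge> real (card A) - r * N \<and> real (indeg E A x) \<ge> real (card A) - r * N)}"
          then have xV: "x \<in> V" unfolding B_def by (auto split: if_splits)
          show "x \<in> V - Gd"
          proof (rule ccontr)
            assume "x \<notin> V - Gd"
            then have g: "x \<in> Gd" and a: "x \<in> B0" using xa xV unfolding B_def by (auto split: if_splits)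
            have "real (outdeg E A0 x) + real (outdeg E T0 x) > a0 + t0 - 2*d*N" using good(3)[OF g] a by auto
            moreover have "real (indeg E A0 x) + real (indeg E S0 x) > a0 + s0 - 2*d*N" using good(4)[OF g] a by auto
            ultimately have "real (outdeg E A x) \<ge> real (card A) - r * N \<and> real (indeg E A x) \<ge> real (card A) - r * N"
              using vtx(6)[OF xV] vtx(9)[OF xV] pN(1) dN m sh(1)[of x] sh(3)[of x] sh(6) by (intro conjI; linarith)
            then show False using xa by auto
          qed
        qed
        show ?thesis using card_moved[OF sub] pN(2) dN by linarith
      qed
      show "real (card {x\<in>S. \<not> (real (outdeg E (B \<union> S) x) \<ge> real (card B) + real (card S) - r * N \<and>
                           real (indeg E (A \<union> S) x) \<ge> real (card A) + real (card S) - r * N)}) \<le> eps1 * N"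
      proof -
        have sub: "{x\<in>S. \<not> (real (outdeg E (B \<union> S) x) \<ge> real (card B) + real (card S) - r * N \<and>
                           real (indeg E (A \<union> S) x) \<ge> real (card A) + real (card S) - r * N)} \<subseteq> V - Gd"
        proof
          fix x assume xa: "x \<in> {x\<in>S. \<not> (real (outdeg E (B \<union> S) x) \<ge> real (card B) + real (card S) - r * N \<and>
                           real (indeg E (A \<union> S) x) \<ge> real (card A) + real (card S) - r * N)}"
          then have xV: "x \<in> V" unfolding S_def by (auto split: if_splits)
          show "x \<in> V - Gd"
          proof (rule ccontr)
            assume "x \<notin> V - Gd"
            then have g: "x \<in> Gd" and a: "x \<in> S0" using xa xV unfolding S_def by (auto split: if_splits)
            have "real (outdeg E A0 x) + real (outdeg E T0 x) < d*N" using good(1)[OF g] a by auto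
            moreover have "real (indeg E A0 x) + real (indeg E S0 x) > a0 + s0 - 2*d*N" using good(4)[OF g] a by auto
            ultimately have "real (outdeg E (B \<union> S) x) \<ge> real (card B) + real (card S) - r * N \<and>
                           real (indeg E (A \<union> S) x) \<ge> real (card A) + real (card S) - r * N"
              using v1[OF xV] s0le(7) pN(1) dN m sh(7)[of x] sh(13)[of x] sh(3)[of x] sh(15)[of x] sh(6) sh(12) sh(18)
                uBS[of x] uAS[of x] by (intro conjI; linarith)
            then show False using xa by auto
          qed
        qed
        show ?thesis using card_moved[OF sub] pN(2) dN by linarith
      qed
      show "real (card {x\<in>T. \<not> (real (outdeg E (A \<union> T) x) \<ge> real (card A) + real (card T) - r * N \<and>
                           real (indeg E (B \<union> T) x) \<ge> real (card B) + real (card T) - r * N)}) \<le> eps1 * N"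
      proof -
        have sub: "{x\<in>T. \<not> (real (outdeg E (A \<union> T) x) \<ge> real (card A) + real (card T) - r * N \<and>
                           real (indeg E (B \<union> T) x) \<ge> real (card B) + real (card T) - r * N)} \<subseteq> V - Gd"
        proof
          fix x assume xa: "x \<in> {x\<in>T. \<not> (real (outdeg E (A \<union> T) x) \<ge> real (card A) + real (card T) - r * N \<and>
                           real (indeg E (B \<union> T) x) \<ge> real (card B) + real (card T) - r * N)}"
          then have xV: "x \<in> V" unfolding T_def by (auto split: if_splits)
          show "x \<in> V - Gd"
          proof (rule ccontr)
            assume "x \<notin> V - Gd"
            then have g: "x \<in> Gd" and a: "x \<in> T0" using xa xV unfolding T_def by (auto split: if_splits)
            have "real (outdeg E A0 x) + real (outdeg E T0 x) > a0 + t0 - 2*d*N" using good(3)[OF g] a by auto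
            moreover have "real (indeg E A0 x) + real (indeg E S0 x) < d*N" using good(2)[OF g] a by auto
            ultimately have "real (outdeg E (A \<union> T) x) \<ge> real (card A) + real (card T) - r * N \<and>
                           real (indeg E (B \<union> T) x) \<ge> real (card B) + real (card T) - r * N"
              using v2[OF xV] s0le(8) pN(1) dN m sh(1)[of x] sh(19)[of x] sh(9)[of x] sh(21)[of x] sh(6) sh(12) sh(24)
                uAT[of x] uBT[of x] by (intro conjI; linarith)
            then show False using xa by auto
          qed
        qed
        show ?thesis using card_moved[OF sub] pN(2) dN by linarith
      qed
    qed
  qed
qed

end

context ext0
begin

lemma caseP:
  fixes eps3 eta2 tau :: real
  assumes ca: "a0 \<le> 2*tau*N"
    and c1: "10*d \<le> tau" and c2: "100*tau \<le> eps3" and c3: "100*eps3 \<le> eta2" and c4: "eta2 \<le> 1/100"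
  shows "\<exists>A B S T. partition4 V A B S T \<and> condP eps3 eta2 V E A B S T"
proof -
  have N0: "N \<ge> 0" by simp
  have pN: "10*(d*N) \<le> tau*N" "100*(tau*N) \<le> eps3*N" "100*(eps3*N) \<le> eta2*N" "eta2*N \<le> N/100"
    using mult_right_mono[OF c1 N0] mult_right_mono[OF c2 N0] mult_right_mono[OF c3 N0]
      mult_right_mono[OF c4 N0] by (auto simp: algebra_simps)
  have fl: "real_of_int \<lfloor>N/2\<rfloor> \<le> N/2" "N/2 \<le> real_of_int \<lceil>N/2\<rceil>"
    by (rule of_int_floor_le, rule le_of_int_ceiling)
  have s0le: "s0 \<ge> N/2 - 1 - a0" "t0 \<ge> N/2 - 1 - a0" "b0 \<le> a0 + 1" "s0 \<le> N/2 + 1" "t0 \<le> N/2 + 1"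
    using sizes by linarith+
  define th where "th = 2*eta2*N"
  have thN: "4*th + 4*tau*N + 2 \<le> N/2" using pN dN unfolding th_def by linarith
  have th0: "th \<ge> 0" "tau*N \<ge> 0" "d*N \<le> th" using pN dN unfolding th_def by linarith+
  define rS where "rS x \<longleftrightarrow> real (outdeg E S0 x) \<ge> th \<and> real (indeg E S0 x) \<ge> th" for x
  define rT where "rT x \<longleftrightarrow> real (outdeg E T0 x) \<ge> th \<and> real (indeg E T0 x) \<ge> th" for x
  define A where "A = {x\<in>V. \<not> rS x \<and> \<not> rT x \<and> real (indeg E S0 x) < th}"
  define B where "B = {x\<in>V. \<not> rS x \<and> \<not> rT x \<and> \<not> real (indeg E S0 x) < th}"
  define S where "S = {x\<in>V. rS x}"
  define T where "T = {x\<in>V. \<not> rS x \<and> rT x}"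
  have part: "partition4 V A B S T"
    unfolding partition4_def
  proof (intro conjI)
    show "A \<union> B \<union> S \<union> T = V" unfolding A_def B_def S_def T_def by auto
    show "A \<inter> B = {}" unfolding A_def B_def by auto
    show "A \<inter> S = {}" unfolding A_def S_def by auto
    show "A \<inter> T = {}" unfolding A_def T_def by auto
    show "B \<inter> S = {}" unfolding B_def S_def by auto
    show "B \<inter> T = {}" unfolding B_def T_def by auto
    show "S \<inter> T = {}" unfolding S_def T_def by auto
  qed
  have v1: "\<And>x. x \<in> V \<Longrightarrow> real (outdeg E A0 x) + real (outdeg E B0 x) + real (outdeg E S0 x) + real (outdeg E T0 x) \<ge> N/2"
    using vtx(1) by blast
  have v2: "\<And>x. x \<in> V \<Longrightarrow> real (indeg E A0 x) + real (indeg E B0 x) + real (indeg E S0 x) + real (indeg E T0 x) \<ge> N/2"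
    using vtx(2) by blast
  have gS: "rS x" if g: "x \<in> Gd" and a: "x \<in> S0" for x
  proof -
    have xV: "x \<in> V" using g GdV by auto
    have h1: "real (outdeg E A0 x) + real (outdeg E T0 x) < d*N" using good(1)[OF g] a by auto
    have h2: "real (indeg E A0 x) + real (indeg E S0 x) > a0 + s0 - 2*d*N" using good(4)[OF g] a by auto
    have k: "N/2 - d*N - 2*tau*N - 1 \<ge> th" "N/2 - 1 - 2*tau*N - 2*d*N \<ge> th" using thN th0 pN(1) by linarith+
    have "real (outdeg E S0 x) > N/2 - d*N - b0" using v1[OF xV] vtx(4)[OF xV] h1 by linarith
    then have "real (outdeg E S0 x) \<ge> th" using k s0le(3) ca by linarith
    moreover have "real (indeg E S0 x) > s0 - 2*d*N" using h2 vtx(7)[OF xV] by linarith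
    then have "real (indeg E S0 x) \<ge> th" using k s0le(1) ca by linarith
    ultimately show ?thesis unfolding rS_def by simp
  qed
  have gT: "\<not> rS x \<and> rT x" if g: "x \<in> Gd" and a: "x \<in> T0" for x
  proof -
    have xV: "x \<in> V" using g GdV by auto
    have h1: "real (outdeg E A0 x) + real (outdeg E T0 x) > a0 + t0 - 2*d*N" using good(3)[OF g] a by auto
    have i: "real (indeg E A0 x) + real (indeg E S0 x) < d*N" using good(2)[OF g] a by auto
    have k: "N/2 - d*N - 2*tau*N - 1 \<ge> th" "N/2 - 1 - 2*tau*N - 2*d*N \<ge> th" using thN th0 pN(1) by linarith+
    have "real (indeg E T0 x) > N/2 - d*N - b0" using v2[OF xV] vtx(8)[OF xV] i by linarith
    then have "real (indeg E T0 x) \<ge> th" using k s0le(3) ca by linarith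
    moreover have "real (outdeg E T0 x) > t0 - 2*d*N" using h1 vtx(3)[OF xV] by linarith
    then have "real (outdeg E T0 x) \<ge> th" using k s0le(2) ca by linarith
    ultimately have "rT x" unfolding rT_def by simp
    moreover have "\<not> rS x" using i th0(3) unfolding rS_def by (simp add: not_le)
    ultimately show ?thesis by simp
  qed
  define W where "W = (V - Gd) \<union> A0 \<union> B0"
  have Wc: "real (card W) \<le> 5*tau*N"
  proof -
    have "card W \<le> card (V - Gd) + card A0 + card B0" unfolding W_def
      using card_Un_le[of "V - Gd \<union> A0" B0] card_Un_le[of "V - Gd" A0] by linarith
    then show ?thesis using cbad ca s0le(3) pN(1) dN by linarith
  qed
  have WV: "V - W \<subseteq> Gd \<inter> (S0 \<union> T0)" unfolding W_def using Vun by auto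
  define M where "M = mv V A B S T A0 B0 S0 T0"
  have MW: "M \<subseteq> W"
  proof
    fix x assume xM: "x \<in> M"
    show "x \<in> W"
    proof (rule ccontr)
      assume "x \<notin> W"
      then have xV: "x \<in> V" and g: "x \<in> Gd" and st: "x \<in> S0 \<or> x \<in> T0" using xM WV unfolding M_def mv_def by auto
      have "x \<in> S \<inter> S0 \<or> x \<in> T \<inter> T0" using st gS[OF g] gT[OF g] xV unfolding S_def T_def by auto
      then show False using xM unfolding M_def mv_def by auto
    qed
  qed
  have fW: "finite W" unfolding W_def using fV fin0 by auto
  have m: "real (card M) \<le> 5*tau*N" using card_mono[OF fW MW] Wc by linarith
  note sh = shift_all[OF dg part P0 M_def]
  have exc: "real (card X) \<le> 5*tau*N" if "X \<subseteq> W" for X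
    using card_mono[OF fW that] Wc by linarith
  have K: "th - 5*tau*N \<ge> eta2*N" "th + 9*tau*N + 1 < 3*eta2*N" "2*d*N + 7*tau*N + 1 \<le> eps3*N"
    "5*tau*N \<le> eps3*N" "2*tau*N + 1 + 5*tau*N \<le> eps3*N"
    using pN dN th0 unfolding th_def by linarith+
  have Sbig: "real (outdeg E S x) \<ge> N/2 - eps3*N \<and> real (indeg E S x) \<ge> N/2 - eps3*N"
    if g: "x \<in> Gd" and a: "x \<in> S0" for x
  proof -
    have xV: "x \<in> V" using g GdV by auto
    have h1: "real (outdeg E A0 x) + real (outdeg E T0 x) < d*N" using good(1)[OF g] a by auto
    have h2: "real (indeg E A0 x) + real (indeg E S0 x) > a0 + s0 - 2*d*N" using good(4)[OF g] a by auto
    have "real (outdeg E S0 x) > N/2 - d*N - b0" using v1[OF xV] vtx(4)[OF xV] h1 by linarith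
    then have "real (outdeg E S0 x) > N/2 - d*N - 2*tau*N - 1" using s0le(3) ca by linarith
    then have o: "real (outdeg E S x) \<ge> N/2 - eps3*N" using sh(13)[of x] m K(3) th0 dN by linarith
    have "real (indeg E S0 x) > s0 - 2*d*N" using h2 vtx(7)[OF xV] by linarith
    then have "real (indeg E S0 x) > N/2 - 1 - 2*tau*N - 2*d*N" using s0le(1) ca by linarith
    then have "real (indeg E S x) \<ge> N/2 - eps3*N" using sh(15)[of x] m K(3) by linarith
    with o show ?thesis by simp
  qed
  have Tbig: "real (outdeg E T x) \<ge> N/2 - eps3*N \<and> real (indeg E T x) \<ge> N/2 - eps3*N"
    if g: "x \<in> Gd" and a: "x \<in> T0" for x
  proof -
    have xV: "x \<in> V" using g GdV by auto
    have h1: "real (outdeg E A0 x) + real (outdeg E T0 x) > a0 + t0 - 2*d*N" using good(3)[OF g] a by auto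
    have h2: "real (indeg E A0 x) + real (indeg E S0 x) < d*N" using good(2)[OF g] a by auto
    have "real (indeg E T0 x) > N/2 - d*N - b0" using v2[OF xV] vtx(8)[OF xV] h2 by linarith
    then have "real (indeg E T0 x) > N/2 - d*N - 2*tau*N - 1" using s0le(3) ca by linarith
    then have o: "real (indeg E T x) \<ge> N/2 - eps3*N" using sh(21)[of x] m K(3) th0 dN by linarith
    have "real (outdeg E T0 x) > t0 - 2*d*N" using h1 vtx(3)[OF xV] by linarith
    then have "real (outdeg E T0 x) > N/2 - 1 - 2*tau*N - 2*d*N" using s0le(2) ca by linarith
    then have "real (outdeg E T x) \<ge> N/2 - eps3*N" using sh(19)[of x] m K(3) by linarith
    with o show ?thesis by simp
  qed
  show ?thesis
  proof (intro exI conjI)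
    show "partition4 V A B S T" by (rule part)
    show "condP eps3 eta2 V E A B S T"
      unfolding condP_def Let_def
    proof (intro conjI)
      show "real_of_int \<lfloor>N/2\<rfloor> - eps3*N \<le> real (card S)" using sh(17) m s0le(1) ca fl(1) K(5) by linarith
      show "real (card S) \<le> real_of_int \<lceil>N/2\<rceil> + eps3*N" using sh(18) m s0le(4) fl(2) K(5) by linarith
      show "real_of_int \<lfloor>N/2\<rfloor> - eps3*N \<le> real (card T)" using sh(23) m s0le(2) ca fl(1) K(5) by linarith
      show "real (card T) \<le> real_of_int \<lceil>N/2\<rceil> + eps3*N" using sh(24) m s0le(5) fl(2) K(5) by linarith
      show "semideg_ge E S (eta2*N)" unfolding semideg_ge_def
      proof
        fix x assume "x \<in> S"
        then have "rS x" unfolding S_def by auto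
        then show "real (outdeg E S x) \<ge> eta2*N \<and> real (indeg E S x) \<ge> eta2*N"
          using sh(13)[of x] sh(15)[of x] m K(1) unfolding rS_def by (intro conjI; linarith)
      qed
      show "semideg_ge E T (eta2*N)" unfolding semideg_ge_def
      proof
        fix x assume "x \<in> T"
        then have "rT x" unfolding T_def by auto
        then show "real (outdeg E T x) \<ge> eta2*N \<and> real (indeg E T x) \<ge> eta2*N"
          using sh(19)[of x] sh(21)[of x] m K(1) unfolding rT_def by (intro conjI; linarith)
      qed
      show "real (card {x\<in>S. \<not> (real (outdeg E S x) \<ge> N/2 - eps3*N \<and> real (indeg E S x) \<ge> N/2 - eps3*N)}) \<le> eps3*N"
      proof -
        have sub: "{x\<in>S. \<not> (real (outdeg E S x) \<ge> N/2 - eps3*N \<and> real (indeg E S x) \<ge> N/2 - eps3*N)} \<subseteq> W"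
        proof
          fix x assume xa: "x \<in> {x\<in>S. \<not> (real (outdeg E S x) \<ge> N/2 - eps3*N \<and> real (indeg E S x) \<ge> N/2 - eps3*N)}"
          then have xV: "x \<in> V" unfolding S_def by auto
          show "x \<in> W"
          proof (rule ccontr)
            assume "x \<notin> W"
            then have g: "x \<in> Gd" and a: "x \<in> S0 \<or> x \<in> T0" using WV xV by auto
            have a': "x \<in> S0" using a gT[OF g] xa unfolding S_def by auto
            show False using Sbig[OF g a'] xa by auto
          qed
        qed
        show ?thesis using exc[OF sub] K(4) by linarith
      qed
      show "real (card {x\<in>T. \<not> (real (outdeg E T x) \<ge> N/2 - eps3*N \<and> real (indeg E T x) \<ge> N/2 - eps3*N)}) \<le> eps3*N"
      proof -
        have sub: "{x\<in>T. \<not> (real (outdeg E T x) \<ge> N/2 - eps3*N \<and> real (indeg E T x) \<ge> N/2 - eps3*N)} \<subseteq> W"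
        proof
          fix x assume xa: "x \<in> {x\<in>T. \<not> (real (outdeg E T x) \<ge> N/2 - eps3*N \<and> real (indeg E T x) \<ge> N/2 - eps3*N)}"
          then have xV: "x \<in> V" unfolding T_def by auto
          show "x \<in> W"
          proof (rule ccontr)
            assume "x \<notin> W"
            then have g: "x \<in> Gd" and a: "x \<in> S0 \<or> x \<in> T0" using WV xV by auto
            have a': "x \<in> T0" using a gS[OF g] xa unfolding T_def by auto
            show False using Tbig[OF g a'] xa by auto
          qed
        qed
        show ?thesis using exc[OF sub] K(4) by linarith
      qed
      show "real (card A) + real (card B) \<le> eps3*N"
      proof -
        have "A \<union> B \<subseteq> W"
        proof
          fix x assume xa: "x \<in> A \<union> B"
          then have xV: "x \<in> V" unfolding A_def B_def by auto
          show "x \<in> W"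
          proof (rule ccontr)
            assume "x \<notin> W"
            then have g: "x \<in> Gd" and a: "x \<in> S0 \<or> x \<in> T0" using WV xV by auto
            then show False using gS[OF g] gT[OF g] xa unfolding A_def B_def by auto
          qed
        qed
        then have "real (card (A \<union> B)) \<le> 5*tau*N" by (rule exc)
        moreover have "card (A \<union> B) = card A + card B"
        proof (rule card_Un_disjoint)
          show "finite A" "finite B" using fV unfolding A_def B_def by auto
          show "A \<inter> B = {}" using part unfolding partition4_def by auto
        qed
        ultimately show ?thesis using K(4) by simp
      qed
      show "\<forall>x\<in>A. real (indeg E T x) > N/2 - 3*eta2*N \<and> real (outdeg E S x) > N/2 - 3*eta2*N \<and>
            real (indeg E S x) \<le> 3*eta2*N \<and> real (outdeg E T x) \<le> 3*eta2*N"
      proof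
        fix x assume "x \<in> A"
        then have xV: "x \<in> V" and n1: "\<not> rS x" and n2: "\<not> rT x" and i1: "real (indeg E S0 x) < th" unfolding A_def by auto
        have "real (indeg E T0 x) > N/2 - th - a0 - b0" using v2[OF xV] vtx(7)[OF xV] vtx(8)[OF xV] i1 by linarith
        then have iT: "real (indeg E T0 x) > N/2 - th - 4*tau*N - 1" using ca s0le(3) by linarith
        then have o1: "real (outdeg E T0 x) < th" using n2 thN th0 unfolding rT_def by auto
        have "real (outdeg E S0 x) > N/2 - th - a0 - b0" using v1[OF xV] vtx(3)[OF xV] vtx(4)[OF xV] o1 by linarith
        then have oS: "real (outdeg E S0 x) > N/2 - th - 4*tau*N - 1" using ca s0le(3) by linarith
        have c1: "real (indeg E T x) > N/2 - 3*eta2*N" using iT sh(21)[of x] m K(2) by linarith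
        have c2: "real (outdeg E S x) > N/2 - 3*eta2*N" using oS sh(13)[of x] m K(2) by linarith
        have c3: "real (indeg E S x) \<le> 3*eta2*N" using i1 sh(16)[of x] m K(2) th0 by linarith
        have c4: "real (outdeg E T x) \<le> 3*eta2*N" using o1 sh(20)[of x] m K(2) th0 by linarith
        show "real (indeg E T x) > N/2 - 3*eta2*N \<and> real (outdeg E S x) > N/2 - 3*eta2*N \<and>
            real (indeg E S x) \<le> 3*eta2*N \<and> real (outdeg E T x) \<le> 3*eta2*N"
          using c1 c2 c3 c4 by simp
      qed
      show "\<forall>x\<in>B. real (indeg E S x) > N/2 - 3*eta2*N \<and> real (outdeg E T x) > N/2 - 3*eta2*N \<and>
            real (indeg E T x) \<le> 3*eta2*N \<and> real (outdeg E S x) \<le> 3*eta2*N"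
      proof
        fix x assume "x \<in> B"
        then have xV: "x \<in> V" and n1: "\<not> rS x" and n2: "\<not> rT x" and i1: "real (indeg E S0 x) \<ge> th" unfolding B_def by auto
        have o1: "real (outdeg E S0 x) < th" using n1 i1 unfolding rS_def by auto
        have "real (outdeg E T0 x) > N/2 - th - a0 - b0" using v1[OF xV] vtx(3)[OF xV] vtx(4)[OF xV] o1 by linarith
        then have oT: "real (outdeg E T0 x) > N/2 - th - 4*tau*N - 1" using ca s0le(3) by linarith
        then have i2: "real (indeg E T0 x) < th" using n2 thN th0 unfolding rT_def by auto
        have "real (indeg E S0 x) > N/2 - th - a0 - b0" using v2[OF xV] vtx(7)[OF xV] vtx(8)[OF xV] i2 by linarith
        then have iS: "real (indeg E S0 x) > N/2 - th - 4*tau*N - 1" using ca s0le(3) by linarith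
        have c1: "real (indeg E S x) > N/2 - 3*eta2*N" using iS sh(15)[of x] m K(2) by linarith
        have c2: "real (outdeg E T x) > N/2 - 3*eta2*N" using oT sh(19)[of x] m K(2) by linarith
        have c3: "real (indeg E T x) \<le> 3*eta2*N" using i2 sh(22)[of x] m K(2) th0 by linarith
        have c4: "real (outdeg E S x) \<le> 3*eta2*N" using o1 sh(14)[of x] m K(2) th0 by linarith
        show "real (indeg E S x) > N/2 - 3*eta2*N \<and> real (outdeg E T x) > N/2 - 3*eta2*N \<and>
            real (indeg E T x) \<le> 3*eta2*N \<and> real (outdeg E S x) \<le> 3*eta2*N"
          using c1 c2 c3 c4 by simp
      qed
    qed
  qed
qed

end

definition ccQ :: "(nat \<times> nat) set \<Rightarrow> nat set \<Rightarrow> nat set \<Rightarrow> nat set \<Rightarrow> nat set \<Rightarrow> nat set \<Rightarrow> nat set \<Rightarrow> real \<Rightarrow> nat \<Rightarrow> bool" where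
  "ccQ E A1 B1 A B S T c x \<longleftrightarrow>
    (x \<in> A \<longrightarrow> real (outdeg E B1 x) \<ge> c \<and> real (indeg E B1 x) \<ge> c) \<and>
    (x \<in> B \<longrightarrow> real (outdeg E A1 x) \<ge> c \<and> real (indeg E A1 x) \<ge> c) \<and>
    (x \<in> S \<longrightarrow> real (indeg E A1 x) \<ge> c \<and> real (outdeg E B1 x) \<ge> c) \<and>
    (x \<in> T \<longrightarrow> real (indeg E B1 x) \<ge> c \<and> real (outdeg E A1 x) \<ge> c)"

definition q8 :: "(nat \<times> nat) set \<Rightarrow> real \<Rightarrow> nat set \<Rightarrow> nat set \<Rightarrow> nat set \<Rightarrow> bool" where
  "q8 E N B S T \<longleftrightarrow> (\<forall>x\<in>B. real (outdeg E B x) < N/20 \<and> real (indeg E B x) < N/20) \<and>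
        (\<forall>x\<in>S. real (indeg E B x) < N/20) \<and>
        (\<forall>x\<in>T. real (outdeg E B x) < N/20)"

lemma mv_keep:
  assumes "partition4 V A B S T" "partition4 V A1 B1 S1 T1" "x \<in> V" "x \<notin> mv V A B S T A1 B1 S1 T1"
  shows "x \<in> A \<Longrightarrow> x \<in> A1" "x \<in> B \<Longrightarrow> x \<in> B1"
  using assms unfolding mv_def partition4_def by auto

lemma Q_final:
  fixes gam beta eps3 :: real
  assumes dg: "digraph V E" and P1: "partition4 V A1 B1 S1 T1" and GV: "G \<subseteq> V"
    and cG: "real (card (V - G)) \<le> beta * real (card V)"
    and H2: "\<forall>x\<in>G. (x \<in> A1 \<longrightarrow> real (outdeg E B1 x) \<ge> real (card V)/2 - gam * real (card V) \<and> real (indeg E B1 x) \<ge> real (card V)/2 - gam * real (card V)) \<and>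
                    (x \<in> B1 \<longrightarrow> real (outdeg E A1 x) \<ge> real (card V)/2 - gam * real (card V) \<and> real (indeg E A1 x) \<ge> real (card V)/2 - gam * real (card V))"
    and H3: "\<bar>real (card A1) - real (card V)/2\<bar> \<le> gam * real (card V)" "\<bar>real (card B1) - real (card V)/2\<bar> \<le> gam * real (card V)"
       "real (card S1) + real (card T1) \<le> gam * real (card V)"
    and cst: "0 \<le> beta" "0 \<le> gam" "beta + 6*gam \<le> eps3" "gam \<le> 1/1000"
    and P: "partition4 V A B S T" and inv: "\<forall>x\<in>V. ccQ E A1 B1 A B S T (real (card V)/30) x"
    and mvb: "real (card (mv V A B S T A1 B1 S1 T1)) \<le> 2*gam*real (card V)"
    and qq: "card A < card B \<longrightarrow> q8 E (real (card V)) B S T"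
  shows "condQ eps3 V E A B S T"
proof -
  define N where "N = real (card V)"
  define M where "M = mv V A B S T A1 B1 S1 T1"
  note sh = shift_all[OF dg P P1 M_def]
  have N0: "N \<ge> 0" unfolding N_def by simp
  have m: "real (card M) \<le> 2*gam*N" using mvb unfolding M_def N_def by simp
  have pN: "0 \<le> beta*N" "0 \<le> gam*N" "beta*N + 6*(gam*N) \<le> eps3*N" "gam*N \<le> N/1000"
    using mult_right_mono[OF cst(3) N0] mult_right_mono[OF cst(4) N0] cst(1,2) N0 by (auto simp: algebra_simps)
  have h3: "real (card A1) \<ge> N/2 - gam*N" "real (card A1) \<le> N/2 + gam*N"
     "real (card B1) \<ge> N/2 - gam*N" "real (card B1) \<le> N/2 + gam*N"
     "real (card S1) + real (card T1) \<le> gam*N" using H3 unfolding N_def abs_le_iff by linarith+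
  have fl: "real_of_int \<lfloor>N/2\<rfloor> \<le> N/2" "N/2 \<le> real_of_int \<lceil>N/2\<rceil>"
    by (rule of_int_floor_le, rule le_of_int_ceiling)
  have fV: "finite V" using dg unfolding digraph_def by auto
  have fM: "finite M" unfolding M_def mv_def using fV by auto
  have cc: "ccQ E A1 B1 A B S T (N/30) x" if "x \<in> V" for x using inv that unfolding N_def by auto
  have inV: "A \<subseteq> V" "B \<subseteq> V" "S \<subseteq> V" "T \<subseteq> V" using P unfolding partition4_def by auto
  have exc: "real (card X) \<le> eps3*N" if "X \<subseteq> (V - G) \<union> M" for X
  proof -
    have "card X \<le> card ((V - G) \<union> M)" using that fV fM by (intro card_mono) auto
    also have "\<dots> \<le> card (V - G) + card M" by (rule card_Un_le)
    finally show ?thesis using cG m pN unfolding N_def by linarith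
  qed
  show ?thesis
    unfolding condQ_def Let_def N_def[symmetric]
  proof (intro conjI)
    show "real_of_int \<lfloor>N/2\<rfloor> - eps3*N \<le> real (card A)" using sh(5) m h3(1) fl pN by linarith
    show "real (card A) \<le> real_of_int \<lceil>N/2\<rceil> + eps3*N" using sh(6) m h3(2) fl pN by linarith
    show "real_of_int \<lfloor>N/2\<rfloor> - eps3*N \<le> real (card B)" using sh(11) m h3(3) fl pN by linarith
    show "real (card B) \<le> real_of_int \<lceil>N/2\<rceil> + eps3*N" using sh(12) m h3(4) fl pN by linarith
    show "bip_semideg_ge E A B (N/50)" unfolding bip_semideg_ge_def
    proof (intro conjI ballI)
      fix x assume x: "x \<in> A"
      then have "real (outdeg E B1 x) \<ge> N/30" "real (indeg E B1 x) \<ge> N/30" using cc[of x] inV unfolding ccQ_def by auto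
      then show "real (outdeg E B x) \<ge> N/50" "real (indeg E B x) \<ge> N/50" using sh(7)[of x] sh(9)[of x] m pN by linarith+
    next
      fix x assume x: "x \<in> B"
      then have "real (outdeg E A1 x) \<ge> N/30" "real (indeg E A1 x) \<ge> N/30" using cc[of x] inV unfolding ccQ_def by auto
      then show "real (outdeg E A x) \<ge> N/50" "real (indeg E A x) \<ge> N/50" using sh(1)[of x] sh(3)[of x] m pN by linarith+
    qed
    show "real (card {x\<in>A. \<not> (real (outdeg E B x) \<ge> N/2 - eps3*N \<and> real (indeg E B x) \<ge> N/2 - eps3*N)}) \<le> eps3*N"
    proof (rule exc, rule subsetI)
      fix x assume xa: "x \<in> {x\<in>A. \<not> (real (outdeg E B x) \<ge> N/2 - eps3*N \<and> real (indeg E B x) \<ge> N/2 - eps3*N)}"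
      then have xV: "x \<in> V" using inV by auto
      show "x \<in> (V - G) \<union> M"
      proof (rule ccontr)
        assume "x \<notin> (V - G) \<union> M"
        then have g: "x \<in> G" and nm: "x \<notin> M" using xV by auto
        have "x \<in> A1" using mv_keep(1)[OF P P1 xV nm[unfolded M_def]] xa by auto
        then have "real (outdeg E B1 x) \<ge> N/2 - gam*N" "real (indeg E B1 x) \<ge> N/2 - gam*N" using H2 g unfolding N_def by auto
        then have "real (outdeg E B x) \<ge> N/2 - eps3*N \<and> real (indeg E B x) \<ge> N/2 - eps3*N"
          using sh(7)[of x] sh(9)[of x] m pN by (intro conjI; linarith)
        then show False using xa by auto
      qed
    qed
    show "real (card {x\<in>B. \<not> (real (outdeg E A x) \<ge> N/2 - eps3*N \<and> real (indeg E A x) \<ge> N/2 - eps3*N)}) \<le> eps3*N"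
    proof (rule exc, rule subsetI)
      fix x assume xa: "x \<in> {x\<in>B. \<not> (real (outdeg E A x) \<ge> N/2 - eps3*N \<and> real (indeg E A x) \<ge> N/2 - eps3*N)}"
      then have xV: "x \<in> V" using inV by auto
      show "x \<in> (V - G) \<union> M"
      proof (rule ccontr)
        assume "x \<notin> (V - G) \<union> M"
        then have g: "x \<in> G" and nm: "x \<notin> M" using xV by auto
        have "x \<in> B1" using mv_keep(2)[OF P P1 xV nm[unfolded M_def]] xa by auto
        then have "real (outdeg E A1 x) \<ge> N/2 - gam*N" "real (indeg E A1 x) \<ge> N/2 - gam*N" using H2 g unfolding N_def by auto
        then have "real (outdeg E A x) \<ge> N/2 - eps3*N \<and> real (indeg E A x) \<ge> N/2 - eps3*N"
          using sh(1)[of x] sh(3)[of x] m pN by (intro conjI; linarith)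
        then show False using xa by auto
      qed
    qed
    show "real (card S) + real (card T) \<le> eps3*N" using sh(18) sh(24) m h3(5) pN by linarith
    show "\<forall>x\<in>S. real (indeg E A x) \<ge> N/50 \<and> real (outdeg E B x) \<ge> N/50"
    proof
      fix x assume x: "x \<in> S"
      then have "real (indeg E A1 x) \<ge> N/30" "real (outdeg E B1 x) \<ge> N/30" using cc[of x] inV unfolding ccQ_def by auto
      then show "real (indeg E A x) \<ge> N/50 \<and> real (outdeg E B x) \<ge> N/50" using sh(3)[of x] sh(7)[of x] m pN by (intro conjI; linarith)
    qed
    show "\<forall>x\<in>T. real (indeg E B x) \<ge> N/50 \<and> real (outdeg E A x) \<ge> N/50"
    proof
      fix x assume x: "x \<in> T"
      then have "real (indeg E B1 x) \<ge> N/30" "real (outdeg E A1 x) \<ge> N/30" using cc[of x] inV unfolding ccQ_def by auto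
      then show "real (indeg E B x) \<ge> N/50 \<and> real (outdeg E A x) \<ge> N/50" using sh(9)[of x] sh(1)[of x] m pN by (intro conjI; linarith)
    qed
    show "real (card A) < real (card B) \<longrightarrow>
        (\<forall>x\<in>B. real (outdeg E B x) < N/20 \<and> real (indeg E B x) < N/20) \<and>
        (\<forall>x\<in>S. real (indeg E B x) < N/20) \<and>
        (\<forall>x\<in>T. real (outdeg E B x) < N/20)"
      using qq unfolding q8_def N_def by auto
  qed
qed

lemma mv_move:
  assumes "\<And>y. y \<noteq> x \<Longrightarrow> (y \<in> A' \<longleftrightarrow> y \<in> A) \<and> (y \<in> B' \<longleftrightarrow> y \<in> B) \<and> (y \<in> S' \<longleftrightarrow> y \<in> S) \<and> (y \<in> T' \<longleftrightarrow> y \<in> T)"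
  shows "mv V A' B' S' T' A1 B1 S1 T1 \<subseteq> insert x (mv V A B S T A1 B1 S1 T1)"
  using assms unfolding mv_def by blast

lemma ccQ_same:
  assumes "(y \<in> A' \<longleftrightarrow> y \<in> A) \<and> (y \<in> B' \<longleftrightarrow> y \<in> B) \<and> (y \<in> S' \<longleftrightarrow> y \<in> S) \<and> (y \<in> T' \<longleftrightarrow> y \<in> T)"
    and "ccQ E A1 B1 A B S T c y"
  shows "ccQ E A1 B1 A' B' S' T' c y"
  using assms unfolding ccQ_def by blast

lemma Q_iter:
  fixes gam beta eps3 :: real
  assumes dg: "digraph V E" and P1: "partition4 V A1 B1 S1 T1" and GV: "G \<subseteq> V"
    and cG: "real (card (V - G)) \<le> beta * real (card V)"
    and H2: "\<forall>x\<in>G. (x \<in> A1 \<longrightarrow> real (outdeg E B1 x) \<ge> real (card V)/2 - gam * real (card V) \<and> real (indeg E B1 x) \<ge> real (card V)/2 - gam * real (card V)) \<and>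
                    (x \<in> B1 \<longrightarrow> real (outdeg E A1 x) \<ge> real (card V)/2 - gam * real (card V) \<and> real (indeg E A1 x) \<ge> real (card V)/2 - gam * real (card V))"
    and H3: "\<bar>real (card A1) - real (card V)/2\<bar> \<le> gam * real (card V)" "\<bar>real (card B1) - real (card V)/2\<bar> \<le> gam * real (card V)"
       "real (card S1) + real (card T1) \<le> gam * real (card V)"
    and cst: "0 \<le> beta" "0 \<le> gam" "beta + 6*gam \<le> eps3" "gam \<le> 1/1000"
    and a1b1: "card A1 \<le> card B1"
  shows "\<forall>A B S T. partition4 V A B S T \<and> (\<forall>x\<in>V. ccQ E A1 B1 A B S T (real (card V)/30) x) \<and>
      card (mv V A B S T A1 B1 S1 T1) + (card B - card A) \<le> card B1 - card A1 \<and> card A \<le> card B \<and>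
      card B - card A = g \<longrightarrow>
      (\<exists>A B S T. partition4 V A B S T \<and> condQ eps3 V E A B S T \<and> card A \<le> card B)"
proof (induction g rule: less_induct)
  case (less g)
  show ?case
  proof (intro allI impI, elim conjE)
    fix A B S T
    assume P: "partition4 V A B S T" and inv: "\<forall>x\<in>V. ccQ E A1 B1 A B S T (real (card V)/30) x"
      and gp: "card (mv V A B S T A1 B1 S1 T1) + (card B - card A) \<le> card B1 - card A1"
      and ab: "card A \<le> card B" and gg: "card B - card A = g"
    define N where "N = real (card V)"
    have N0: "N \<ge> 0" unfolding N_def by simp
    have fV: "finite V" using dg unfolding digraph_def by auto
    have inV: "A \<subseteq> V" "B \<subseteq> V" "S \<subseteq> V" "T \<subseteq> V" using P unfolding partition4_def by auto
    have fin: "finite A" "finite B" "finite S" "finite T" using inV fV by (auto intro: finite_subset)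
    have dis: "A \<inter> B = {}" "A \<inter> S = {}" "A \<inter> T = {}" "B \<inter> S = {}" "B \<inter> T = {}" "S \<inter> T = {}"
      using P unfolding partition4_def by auto
    have h3: "real (card B1) - real (card A1) \<le> 2*gam*N" using H3 unfolding N_def abs_le_iff by linarith
    have mle: "real (card (mv V A B S T A1 B1 S1 T1)) \<le> 2*gam*N"
    proof -
      have "card (mv V A B S T A1 B1 S1 T1) \<le> card B1 - card A1" using gp by linarith
      then have "real (card (mv V A B S T A1 B1 S1 T1)) \<le> real (card B1) - real (card A1)"
        using a1b1 by (simp add: of_nat_diff)
      then show ?thesis using h3 by linarith
    qed
    have gN: "2*gam*N \<le> N/500" using mult_right_mono[OF cst(4) N0] by (simp add: algebra_simps)
    note sh = shift_all[OF dg P P1 refl]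
    have final: "\<exists>A B S T. partition4 V A B S T \<and> condQ eps3 V E A B S T \<and> card A \<le> card B"
      if qq: "card A < card B \<longrightarrow> q8 E (real (card V)) B S T"
      using Q_final[OF dg P1 GV cG H2 H3 cst P inv mle[unfolded N_def] qq] P ab by blast
    have step: "\<exists>A B S T. partition4 V A B S T \<and> condQ eps3 V E A B S T \<and> card A \<le> card B"
      if P': "partition4 V A' B' S' T'" and x: "x \<in> V"
        and same: "\<And>y. y \<noteq> x \<Longrightarrow> (y \<in> A' \<longleftrightarrow> y \<in> A) \<and> (y \<in> B' \<longleftrightarrow> y \<in> B) \<and> (y \<in> S' \<longleftrightarrow> y \<in> S) \<and> (y \<in> T' \<longleftrightarrow> y \<in> T)"
        and ccx: "ccQ E A1 B1 A' B' S' T' (real (card V)/30) x"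
        and cards: "card B' - card A' + 1 = card B - card A" "card A' \<le> card B'"
      for A' B' S' T' x
    proof -
      have lt: "g - 1 < g" using cards gg by linarith
      have inv': "\<forall>y\<in>V. ccQ E A1 B1 A' B' S' T' (real (card V)/30) y"
      proof
        fix y assume y: "y \<in> V"
        show "ccQ E A1 B1 A' B' S' T' (real (card V)/30) y"
        proof (cases "y = x")
          case True then show ?thesis using ccx by simp
        next
          case False then show ?thesis using ccQ_same[OF same[OF False]] inv y by blast
        qed
      qed
      have mv': "card (mv V A' B' S' T' A1 B1 S1 T1) \<le> card (mv V A B S T A1 B1 S1 T1) + 1"
      proof -
        have "card (mv V A' B' S' T' A1 B1 S1 T1) \<le> card (insert x (mv V A B S T A1 B1 S1 T1))"
          by (rule card_mono) (use fV mv_move[OF same] in \<open>auto simp: mv_def\<close>)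
        also have "\<dots> \<le> card (mv V A B S T A1 B1 S1 T1) + 1" by (rule card_insert_le_m1) simp_all
        finally show ?thesis .
      qed
      have pre: "partition4 V A' B' S' T' \<and> (\<forall>y\<in>V. ccQ E A1 B1 A' B' S' T' (real (card V)/30) y) \<and>
        card (mv V A' B' S' T' A1 B1 S1 T1) + (card B' - card A') \<le> card B1 - card A1 \<and> card A' \<le> card B' \<and>
        card B' - card A' = g - 1"
        using P' inv' mv' cards gp gg by auto
      show ?thesis using less[OF lt] pre by blast
    qed
    show "\<exists>A B S T. partition4 V A B S T \<and> condQ eps3 V E A B S T \<and> card A \<le> card B"
    proof (cases "card A < card B \<longrightarrow> q8 E (real (card V)) B S T")
      case True then show ?thesis by (rule final)
    next
      case False
      then have lt: "card A < card B" and nq: "\<not> q8 E N B S T" unfolding N_def by auto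
      then consider
          (c1) x where "x \<in> B" "real (outdeg E B x) \<ge> N/20"
        | (c2) x where "x \<in> B" "real (indeg E B x) \<ge> N/20"
        | (c3) x where "x \<in> S" "real (indeg E B x) \<ge> N/20"
        | (c4) x where "x \<in> T" "real (outdeg E B x) \<ge> N/20"
        unfolding q8_def by (auto simp: not_less)
      then show ?thesis
      proof cases
        case (c1 x)
        have xV: "x \<in> V" using c1 inV by auto
        have cx: "real (indeg E A1 x) \<ge> N/30" using inv xV c1(1) unfolding ccQ_def N_def by auto
        have ox: "real (outdeg E B1 x) \<ge> N/30" using sh(8)[of x] c1(2) mle gN N0 by linarith
        show ?thesis
        proof (rule step[of A "B - {x}" "insert x S" T x])
          show "partition4 V A (B - {x}) (insert x S) T" using P c1(1) xV unfolding partition4_def by auto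
          show "ccQ E A1 B1 A (B - {x}) (insert x S) T (real (card V)/30) x"
            using cx ox dis c1(1) unfolding ccQ_def N_def by auto
          show "card (B - {x}) - card A + 1 = card B - card A" "card A \<le> card (B - {x})"
            using lt c1(1) fin by (auto simp: card_Diff_singleton)
        qed (use xV in auto)
      next
        case (c2 x)
        have xV: "x \<in> V" using c2 inV by auto
        have cx: "real (outdeg E A1 x) \<ge> N/30" using inv xV c2(1) unfolding ccQ_def N_def by auto
        have ox: "real (indeg E B1 x) \<ge> N/30" using sh(10)[of x] c2(2) mle gN N0 by linarith
        show ?thesis
        proof (rule step[of A "B - {x}" S "insert x T" x])
          show "partition4 V A (B - {x}) S (insert x T)" using P c2(1) xV unfolding partition4_def by auto
          show "ccQ E A1 B1 A (B - {x}) S (insert x T) (real (card V)/30) x"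
            using cx ox dis c2(1) unfolding ccQ_def N_def by auto
          show "card (B - {x}) - card A + 1 = card B - card A" "card A \<le> card (B - {x})"
            using lt c2(1) fin by (auto simp: card_Diff_singleton)
        qed (use xV in auto)
      next
        case (c3 x)
        have xV: "x \<in> V" using c3 inV by auto
        have cx: "real (outdeg E B1 x) \<ge> N/30" using inv xV c3(1) unfolding ccQ_def N_def by auto
        have ox: "real (indeg E B1 x) \<ge> N/30" using sh(10)[of x] c3(2) mle gN N0 by linarith
        show ?thesis
        proof (rule step[of "insert x A" B "S - {x}" T x])
          show "partition4 V (insert x A) B (S - {x}) T" using P c3(1) xV unfolding partition4_def by auto
          show "ccQ E A1 B1 (insert x A) B (S - {x}) T (real (card V)/30) x"
            using cx ox dis c3(1) unfolding ccQ_def N_def by auto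
          have "x \<notin> A" using dis c3(1) by auto
          then show "card B - card (insert x A) + 1 = card B - card A" "card (insert x A) \<le> card B"
            using lt fin by auto
        qed (use xV in auto)
      next
        case (c4 x)
        have xV: "x \<in> V" using c4 inV by auto
        have cx: "real (indeg E B1 x) \<ge> N/30" using inv xV c4(1) unfolding ccQ_def N_def by auto
        have ox: "real (outdeg E B1 x) \<ge> N/30" using sh(8)[of x] c4(2) mle gN N0 by linarith
        show ?thesis
        proof (rule step[of "insert x A" B S "T - {x}" x])
          show "partition4 V (insert x A) B S (T - {x})" using P c4(1) xV unfolding partition4_def by auto
          show "ccQ E A1 B1 (insert x A) B S (T - {x}) (real (card V)/30) x"
            using cx ox dis c4(1) unfolding ccQ_def N_def by auto
          have "x \<notin> A" using dis c4(1) by auto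
          then show "card B - card (insert x A) + 1 = card B - card A" "card (insert x A) \<le> card B"
            using lt fin by auto
        qed (use xV in auto)
      qed
    qed
  qed
qed

context ext0
begin

lemma caseQ:
  fixes eps3 tau :: real
  assumes cs: "s0 \<le> 2*tau*N"
    and c1: "10*d \<le> tau" and c2: "100*tau \<le> eps3" and c3: "eps3 \<le> 1/100"
  shows "\<exists>A B S T. partition4 V A B S T \<and> condQ eps3 V E A B S T \<and> card A \<le> card B"
proof -
  have N0: "N \<ge> 0" by simp
  have pN: "10*(d*N) \<le> tau*N" "100*(tau*N) \<le> eps3*N" "eps3*N \<le> N/100"
    using mult_right_mono[OF c1 N0] mult_right_mono[OF c2 N0] mult_right_mono[OF c3 N0]
    by (auto simp: algebra_simps)
  have s0le: "a0 \<ge> N/2 - 1 - s0" "a0 \<le> N/2 + 1" "t0 \<le> s0 + 1" "b0 \<ge> a0 - 1" "b0 \<le> a0 + 1"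
    using sizes by linarith+
  define th where "th = N/25"
  have K: "N/2 - 4*tau*N - 1 \<ge> 2*th" "th - 4*d*N \<ge> N/30" "N/2 - 7*tau*N - 2 \<ge> N/30"
     "tau*N \<ge> 10" using pN dN unfolding th_def by linarith+
  define rA where "rA x \<longleftrightarrow> real (outdeg E B0 x) \<ge> th \<and> real (indeg E B0 x) \<ge> th" for x
  define rB where "rB x \<longleftrightarrow> real (outdeg E A0 x) \<ge> th \<and> real (indeg E A0 x) \<ge> th" for x
  define rS where "rS x \<longleftrightarrow> real (indeg E A0 x) \<ge> th \<and> real (outdeg E B0 x) \<ge> th" for x
  define A1 where "A1 = {x\<in>V. if x \<in> Gd then x \<in> A0 else rA x}"
  define B1 where "B1 = {x\<in>V. if x \<in> Gd then x \<in> B0 else (\<not> rA x \<and> rB x)}"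
  define S1 where "S1 = {x\<in>V. if x \<in> Gd then x \<in> S0 else (\<not> rA x \<and> \<not> rB x \<and> rS x)}"
  define T1 where "T1 = {x\<in>V. if x \<in> Gd then x \<in> T0 else (\<not> rA x \<and> \<not> rB x \<and> \<not> rS x)}"
  have part: "partition4 V A1 B1 S1 T1"
    unfolding partition4_def
  proof (intro conjI)
    show "A1 \<union> B1 \<union> S1 \<union> T1 = V" unfolding A1_def B1_def S1_def T1_def using Vun by auto
    show "A1 \<inter> B1 = {}" unfolding A1_def B1_def using dis0 by auto
    show "A1 \<inter> S1 = {}" unfolding A1_def S1_def using dis0 by auto
    show "A1 \<inter> T1 = {}" unfolding A1_def T1_def using dis0 by auto
    show "B1 \<inter> S1 = {}" unfolding B1_def S1_def using dis0 by auto
    show "B1 \<inter> T1 = {}" unfolding B1_def T1_def using dis0 by auto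
    show "S1 \<inter> T1 = {}" unfolding S1_def T1_def using dis0 by auto
  qed
  define M where "M = mv V A1 B1 S1 T1 A0 B0 S0 T0"
  have MG: "M \<subseteq> V - Gd" unfolding M_def mv_def A1_def B1_def S1_def T1_def using Vun by auto
  have m: "real (card M) \<le> 4*d*N" by (rule card_moved[OF MG])
  note sh = shift_all[OF dg part P0 M_def]
  have v1: "\<And>x. x \<in> V \<Longrightarrow> real (outdeg E A0 x) + real (outdeg E B0 x) + real (outdeg E S0 x) + real (outdeg E T0 x) \<ge> N/2"
    using vtx(1) by blast
  have v2: "\<And>x. x \<in> V \<Longrightarrow> real (indeg E A0 x) + real (indeg E B0 x) + real (indeg E S0 x) + real (indeg E T0 x) \<ge> N/2"
    using vtx(2) by blast
  have ruleT: "real (indeg E B0 x) \<ge> th \<and> real (outdeg E A0 x) \<ge> th"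
    if xV: "x \<in> V" and n1: "\<not> rA x" and n2: "\<not> rB x" and n3: "\<not> rS x" for x
  proof -
    have so: "real (outdeg E A0 x) + real (outdeg E B0 x) \<ge> N/2 - 4*tau*N - 1"
      using v1[OF xV] vtx(5)[OF xV] vtx(6)[OF xV] s0le(3) cs by linarith
    have si: "real (indeg E A0 x) + real (indeg E B0 x) \<ge> N/2 - 4*tau*N - 1"
      using v2[OF xV] vtx(9)[OF xV] vtx(10)[OF xV] s0le(3) cs by linarith
    show ?thesis
    proof (cases "real (outdeg E B0 x) < th")
      case True
      then have "real (outdeg E A0 x) \<ge> th" using so K(1) by linarith
      then have "real (indeg E A0 x) < th" using n2 unfolding rB_def by auto
      then have "real (indeg E B0 x) \<ge> th" using si K(1) by linarith
      then show ?thesis using \<open>real (outdeg E A0 x) \<ge> th\<close> by simp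
    next
      case False
      then have "real (indeg E B0 x) < th" using n1 unfolding rA_def by auto
      then have "real (indeg E A0 x) \<ge> th" using si K(1) by linarith
      then show ?thesis using False n3 unfolding rS_def by auto
    qed
  qed
  have gA: "real (outdeg E B0 x) \<ge> N/2 - d*N - 2*tau*N \<and> real (indeg E B0 x) \<ge> N/2 - d*N - 2*tau*N - 1"
    if g: "x \<in> Gd" and a: "x \<in> A0" for x
  proof -
    have xV: "x \<in> V" using g GdV by auto
    have h1: "real (outdeg E A0 x) + real (outdeg E T0 x) < d*N" using good(1)[OF g] a by auto
    have h2: "real (indeg E A0 x) + real (indeg E S0 x) < d*N" using good(2)[OF g] a by auto
    have "real (outdeg E B0 x) \<ge> N/2 - d*N - s0" using v1[OF xV] vtx(5)[OF xV] h1 by linarith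
    moreover have "real (indeg E B0 x) \<ge> N/2 - d*N - t0" using v2[OF xV] vtx(10)[OF xV] h2 by linarith
    ultimately show ?thesis using cs s0le(3) by (intro conjI; linarith)
  qed
  have gO: "real (outdeg E A0 x) \<ge> N/2 - 2*d*N - 2*tau*N - 1"
    if g: "x \<in> Gd" and a: "x \<in> B0 \<union> T0" for x
  proof -
    have xV: "x \<in> V" using g GdV by auto
    have h1: "real (outdeg E A0 x) + real (outdeg E T0 x) > a0 + t0 - 2*d*N" using good(3)[OF g] a by auto
    then show ?thesis using vtx(6)[OF xV] s0le(1) cs by linarith
  qed
  have gI: "real (indeg E A0 x) \<ge> N/2 - 2*d*N - 2*tau*N - 1"
    if g: "x \<in> Gd" and a: "x \<in> B0 \<union> S0" for x
  proof -
    have xV: "x \<in> V" using g GdV by auto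
    have h1: "real (indeg E A0 x) + real (indeg E S0 x) > a0 + s0 - 2*d*N" using good(4)[OF g] a by auto
    then show ?thesis using vtx(9)[OF xV] s0le(1) cs by linarith
  qed
  have gS: "real (outdeg E B0 x) \<ge> N/2 - d*N - 2*tau*N" if g: "x \<in> Gd" and a: "x \<in> S0" for x
  proof -
    have xV: "x \<in> V" using g GdV by auto
    have h1: "real (outdeg E A0 x) + real (outdeg E T0 x) < d*N" using good(1)[OF g] a by auto
    show ?thesis using v1[OF xV] vtx(5)[OF xV] h1 cs by linarith
  qed
  have gT: "real (indeg E B0 x) \<ge> N/2 - d*N - 2*tau*N - 1" if g: "x \<in> Gd" and a: "x \<in> T0" for x
  proof -
    have xV: "x \<in> V" using g GdV by auto
    have h2: "real (indeg E A0 x) + real (indeg E S0 x) < d*N" using good(2)[OF g] a by auto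
    show ?thesis using v2[OF xV] vtx(10)[OF xV] h2 cs s0le(3) by linarith
  qed
  have bigK: "N/2 - 2*d*N - 2*tau*N - 1 - 4*d*N \<ge> N/30" "N/2 - 2*d*N - 2*tau*N - 1 - 4*d*N \<ge> N/2 - 5*tau*N"
    using K pN dN by linarith+
  have H1: "\<forall>x\<in>V. ccQ E A1 B1 A1 B1 S1 T1 (real (card V)/30) x"
  proof
    fix x assume xV: "x \<in> V"
    have cA: "real (outdeg E B1 x) \<ge> N/30 \<and> real (indeg E B1 x) \<ge> N/30" if xa: "x \<in> A1"
    proof -
      have "real (outdeg E B0 x) \<ge> N/2 - 2*d*N - 2*tau*N - 1 \<and> real (indeg E B0 x) \<ge> N/2 - 2*d*N - 2*tau*N - 1 \<or>
            real (outdeg E B0 x) \<ge> th \<and> real (indeg E B0 x) \<ge> th"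
        using xa gA dN unfolding A1_def rA_def by (auto split: if_splits; fastforce)
      then show ?thesis using sh(7)[of x] sh(9)[of x] m K(2) bigK(1) by (elim disjE conjE; intro conjI; linarith)
    qed
    have cB: "real (outdeg E A1 x) \<ge> N/30 \<and> real (indeg E A1 x) \<ge> N/30" if xa: "x \<in> B1"
    proof -
      have "real (outdeg E A0 x) \<ge> N/2 - 2*d*N - 2*tau*N - 1 \<and> real (indeg E A0 x) \<ge> N/2 - 2*d*N - 2*tau*N - 1 \<or>
            real (outdeg E A0 x) \<ge> th \<and> real (indeg E A0 x) \<ge> th"
        using xa gO gI unfolding B1_def rB_def by (auto split: if_splits)
      then show ?thesis using sh(1)[of x] sh(3)[of x] m K(2) bigK(1) by (elim disjE conjE; intro conjI; linarith)
    qed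
    have cS: "real (indeg E A1 x) \<ge> N/30 \<and> real (outdeg E B1 x) \<ge> N/30" if xa: "x \<in> S1"
    proof -
      have "real (indeg E A0 x) \<ge> N/2 - 2*d*N - 2*tau*N - 1 \<and> real (outdeg E B0 x) \<ge> N/2 - 2*d*N - 2*tau*N - 1 \<or>
            real (indeg E A0 x) \<ge> th \<and> real (outdeg E B0 x) \<ge> th"
        using xa gI gS dN unfolding S1_def rS_def by (auto split: if_splits; fastforce)
      then show ?thesis using sh(3)[of x] sh(7)[of x] m K(2) bigK(1) by (elim disjE conjE; intro conjI; linarith)
    qed
    have cT: "real (indeg E B1 x) \<ge> N/30 \<and> real (outdeg E A1 x) \<ge> N/30" if xa: "x \<in> T1"
    proof -
      have "real (indeg E B0 x) \<ge> N/2 - 2*d*N - 2*tau*N - 1 \<and> real (outdeg E A0 x) \<ge> N/2 - 2*d*N - 2*tau*N - 1 \<or>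
            real (indeg E B0 x) \<ge> th \<and> real (outdeg E A0 x) \<ge> th"
        using xa gO gT ruleT[OF xV] dN unfolding T1_def by (auto split: if_splits; fastforce)
      then show ?thesis using sh(9)[of x] sh(1)[of x] m K(2) bigK(1) by (elim disjE conjE; intro conjI; linarith)
    qed
    show "ccQ E A1 B1 A1 B1 S1 T1 (real (card V)/30) x" unfolding ccQ_def using cA cB cS cT by blast
  qed
  have H2: "\<forall>x\<in>Gd. (x \<in> A1 \<longrightarrow> real (outdeg E B1 x) \<ge> N/2 - (5*tau) * N \<and> real (indeg E B1 x) \<ge> N/2 - (5*tau) * N) \<and>
                    (x \<in> B1 \<longrightarrow> real (outdeg E A1 x) \<ge> N/2 - (5*tau) * N \<and> real (indeg E A1 x) \<ge> N/2 - (5*tau) * N)"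
  proof (intro ballI conjI impI)
    fix x assume g: "x \<in> Gd"
    {
      assume "x \<in> A1"
      then have a: "x \<in> A0" using g unfolding A1_def by auto
      show "real (outdeg E B1 x) \<ge> N/2 - (5*tau) * N" "real (indeg E B1 x) \<ge> N/2 - (5*tau) * N"
        using gA[OF g a] sh(7)[of x] sh(9)[of x] m bigK(2) dN by linarith+
    }
    {
      assume "x \<in> B1"
      then have a: "x \<in> B0" using g unfolding B1_def by auto
      show "real (outdeg E A1 x) \<ge> N/2 - (5*tau) * N" "real (indeg E A1 x) \<ge> N/2 - (5*tau) * N"
        using gO[OF g] gI[OF g] a sh(1)[of x] sh(3)[of x] m bigK(2) by auto
    }
  qed
  have H3: "\<bar>real (card A1) - N/2\<bar> \<le> (5*tau) * N" "\<bar>real (card B1) - N/2\<bar> \<le> (5*tau) * N"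
       "real (card S1) + real (card T1) \<le> (5*tau) * N"
  proof -
    show "\<bar>real (card A1) - N/2\<bar> \<le> (5*tau) * N" unfolding abs_le_iff
      using sh(5) sh(6) m s0le(1) s0le(2) cs pN(1) dN by (intro conjI; linarith)
    show "\<bar>real (card B1) - N/2\<bar> \<le> (5*tau) * N" unfolding abs_le_iff
      using sh(11) sh(12) m s0le(1) s0le(2) s0le(4) s0le(5) cs pN(1) dN K(4) by (intro conjI; linarith)
    show "real (card S1) + real (card T1) \<le> (5*tau) * N"
      using sh(18) sh(24) m s0le(3) cs pN(1) dN by linarith
  qed
  have cG: "real (card (V - Gd)) \<le> (4*d) * N" using cbad by simp
  have cst: "0 \<le> 4*d" "0 \<le> 5*tau" "4*d + 6*(5*tau) \<le> eps3" "5*tau \<le> 1/1000"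
    using dpos c1 c2 c3 by linarith+
  have mv0: "mv V A1 B1 S1 T1 A1 B1 S1 T1 = {}" using part unfolding mv_def partition4_def by auto
  have mv0': "mv V B1 A1 T1 S1 B1 A1 T1 S1 = {}" using part unfolding mv_def partition4_def by auto
  show ?thesis
  proof (cases "card A1 \<le> card B1")
    case True
    note it = Q_iter[OF dg part GdV cG H2 H3 cst True, of "card B1 - card A1"]
    have pre: "partition4 V A1 B1 S1 T1 \<and> (\<forall>x\<in>V. ccQ E A1 B1 A1 B1 S1 T1 (real (card V)/30) x) \<and>
      card (mv V A1 B1 S1 T1 A1 B1 S1 T1) + (card B1 - card A1) \<le> card B1 - card A1 \<and> card A1 \<le> card B1 \<and>
      card B1 - card A1 = card B1 - card A1" using part H1 mv0 True by simp
    show ?thesis using it pre by blast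
  next
    case False
    have part': "partition4 V B1 A1 T1 S1" using part unfolding partition4_def by auto
    have H1': "\<forall>x\<in>V. ccQ E B1 A1 B1 A1 T1 S1 (real (card V)/30) x" using H1 unfolding ccQ_def by blast
    have H2': "\<forall>x\<in>Gd. (x \<in> B1 \<longrightarrow> real (outdeg E A1 x) \<ge> N/2 - (5*tau) * N \<and> real (indeg E A1 x) \<ge> N/2 - (5*tau) * N) \<and>
                    (x \<in> A1 \<longrightarrow> real (outdeg E B1 x) \<ge> N/2 - (5*tau) * N \<and> real (indeg E B1 x) \<ge> N/2 - (5*tau) * N)"
      using H2 by blast
    have H3': "real (card T1) + real (card S1) \<le> (5*tau) * N" using H3(3) by simp
    have le: "card B1 \<le> card A1" using False by simp
    note it = Q_iter[OF dg part' GdV cG H2' H3(2) H3(1) H3' cst le, of "card A1 - card B1"]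
    have pre: "partition4 V B1 A1 T1 S1 \<and> (\<forall>x\<in>V. ccQ E B1 A1 B1 A1 T1 S1 (real (card V)/30) x) \<and>
      card (mv V B1 A1 T1 S1 B1 A1 T1 S1) + (card A1 - card B1) \<le> card A1 - card B1 \<and> card B1 \<le> card A1 \<and>
      card A1 - card B1 = card A1 - card B1" using part' H1' mv0' le by simp
    show ?thesis using it pre by blast
  qed
qed

end

lemma main_lemma:
  fixes eps eps1 eta1 tau eps3 eta2 u :: real
  assumes dg: "digraph V E" and sd: "semideg_ge E V (real (card V) / 2)" and ex: "extremal eps V E"
    and upos: "u > 0" and ueps: "eps = u^6" and u3: "eps powr (1/3) = u^2"
    and cu: "u \<le> eps1/100" and ce1: "eps1 \<le> eta1" and ce2: "100*eta1 \<le> tau" and ct: "100*tau \<le> eps3"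
    and c3: "100*eps3 \<le> eta2" and c4: "eta2 \<le> 1/100" and epsN: "eps * real (card V) \<ge> 1"
  shows "\<exists>A B S T. partition4 V A B S T \<and>
          (condP eps3 eta2 V E A B S T \<or>
           (condQ eps3 V E A B S T \<and> card A \<le> card B) \<or>
           condR eps eps1 eta1 tau V E A B S T)"
proof -
  obtain A0 B0 S0 T0 where P0: "partition4 V A0 B0 S0 T0"
    and ab: "\<bar>real (card A0) - real (card B0)\<bar> \<le> 1" and st: "\<bar>real (card S0) - real (card T0)\<bar> \<le> 1"
    and ec: "real (ecount E (A0 \<union> S0) (A0 \<union> T0)) < eps * (real (card V))\<^sup>2"
    using ex unfolding extremal_def by blast
  define d where "d = u^3"
  have dpos: "d > 0" unfolding d_def using upos by simp
  have epsd: "eps = d * d" unfolding d_def ueps by (simp add: power_add[symmetric])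
  have u1: "u \<le> 1/100" using cu ce1 ce2 ct c3 c4 by linarith
  have u0: "0 \<le> u" using upos by simp
  have du: "d \<le> u^2 / 100"
  proof -
    have "u^3 = u * u^2" by (simp add: power2_eq_square power3_eq_cube)
    also have "\<dots> \<le> (1/100) * u^2" by (rule mult_right_mono[OF u1]) simp
    finally show ?thesis unfolding d_def by simp
  qed
  have du2: "d \<le> u"
  proof -
    have "u*u \<le> u*1" by (rule mult_left_mono) (use u1 u0 in auto)
    then have "u^2 \<le> u" by (simp add: power2_eq_square)
    then show ?thesis using du u0 by linarith
  qed
  have eps_le_d: "eps \<le> d"
  proof -
    have "d \<le> 1" using du2 u1 by linarith
    then have "d * d \<le> d * 1" using dpos by (intro mult_left_mono) auto
    then show ?thesis using epsd by simp
  qed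
  have N0: "real (card V) \<ge> 0" by simp
  have dN: "d * real (card V) \<ge> 1" using mult_right_mono[OF eps_le_d N0] epsN by linarith
  obtain Gd where GdV: "Gd \<subseteq> V" and cbad: "real (card (V - Gd)) \<le> 4 * d * real (card V)"
    and gd: "\<forall>x\<in>Gd.
      (x \<in> A0 \<union> S0 \<longrightarrow> real (outdeg E A0 x) + real (outdeg E T0 x) < d * real (card V)) \<and>
      (x \<in> A0 \<union> T0 \<longrightarrow> real (indeg E A0 x) + real (indeg E S0 x) < d * real (card V)) \<and>
      (x \<in> B0 \<union> T0 \<longrightarrow> real (outdeg E A0 x) + real (outdeg E T0 x) > real (card A0) + real (card T0) - 2 * d * real (card V)) \<and>
      (x \<in> B0 \<union> S0 \<longrightarrow> real (indeg E A0 x) + real (indeg E S0 x) > real (card A0) + real (card S0) - 2 * d * real (card V))"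
    using good_set[OF dg sd P0 ab st ec dpos epsd epsN] by blast
  interpret ext0 V E A0 B0 S0 T0 Gd d
    by (unfold_locales) (use dg sd P0 ab st GdV cbad gd dpos dN in auto)
  have cd: "10*d \<le> eps1" "10*d \<le> eta1" "10*d \<le> tau" "20*d \<le> eps powr (1/3)"
    using du du2 cu ce1 ce2 ct u3 u0 zero_le_power2[of u] by linarith+
  show ?thesis
  proof (cases "a0 \<le> 2*tau*N")
    case True
    then show ?thesis using caseP[OF True cd(3) ct c3 c4] by blast
  next
    case False
    show ?thesis
    proof (cases "s0 \<le> 2*tau*N")
      case True
      have "eps3 \<le> 1/100" using c3 c4 ct ce2 by linarith
      then show ?thesis using caseQ[OF True cd(3) ct] by blast
    next
      case False2: False
      have "tau \<le> 1/100" using c3 c4 ct by linarith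
      then show ?thesis using caseR[of tau eps, OF _ _ cd(4) cd(1) cd(2) ce2] False False2 by fastforce
    qed
  qed
qed

lemma final_step:
  fixes eta2 eps3 tau eta1 eps1 eps :: real
  assumes h2: "0 < eta2 \<and> eta2 < 1/100" and h3: "0 < eps3 \<and> eps3 < eta2/100"
    and ht: "0 < tau \<and> tau < eps3/100" and h1: "0 < eta1 \<and> eta1 < tau/100"
    and he1: "0 < eps1 \<and> eps1 < eta1" and he: "0 < eps \<and> eps < (eps1/100)^6"
    and H: "digraph V E \<and> nat \<lceil>1/eps\<rceil> \<le> card V \<and> extremal eps V E \<and> semideg_ge E V (real (card V) / 2)"
  shows "\<exists>A B S T. partition4 V A B S T \<and>
          (condP eps3 eta2 V E A B S T \<or>
           (condQ eps3 V E A B S T \<and> card A \<le> card B) \<or>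
           condR eps eps1 eta1 tau V E A B S T)"
proof -
  define u where "u = eps powr (1/6)"
  have ep: "eps > 0" using he by simp
  have upos: "u > 0" unfolding u_def using ep by simp
  have ueps: "eps = u^6"
  proof -
    have "u^6 = eps powr (real 6 * (1/6))" unfolding u_def using ep by (simp only: powr_power; simp)
    also have "\<dots> = eps" using ep by simp
    finally show ?thesis by simp
  qed
  have u3: "eps powr (1/3) = u^2"
  proof -
    have "u^2 = eps powr (real 2 * (1/6))" unfolding u_def using ep by (simp only: powr_power; simp)
    also have "\<dots> = eps powr (1/3)" by simp
    finally show ?thesis by simp
  qed
  have cu: "u \<le> eps1/100"
  proof -
    have c0: "eps1/100 > 0" using he1 by simp
    have "u < ((eps1/100)^6) powr (1/6)" unfolding u_def
      by (rule powr_less_mono2) (use he in auto)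
    also have "((eps1/100)^6) powr (1/6) = eps1/100"
    proof -
      have "(eps1/100)^6 = (eps1/100) powr (real 6)" using powr_realpow[OF c0, of 6] by simp
      then have "((eps1/100)^6) powr (1/6) = (eps1/100) powr (real 6 * (1/6))" by (simp add: powr_powr)
      also have "\<dots> = eps1/100" using c0 by simp
      finally show ?thesis .
    qed
    finally show ?thesis by simp
  qed
  have epsN: "eps * real (card V) \<ge> 1"
  proof -
    have "real (nat \<lceil>1/eps\<rceil>) \<le> real (card V)" using H by simp
    moreover have "1/eps \<le> real (nat \<lceil>1/eps\<rceil>)" by linarith
    ultimately have "1/eps \<le> real (card V)" by linarith
    then show ?thesis using ep by (simp add: field_simps)
  qed
  show ?thesis
  proof (rule main_lemma[of V E eps u eps1 eta1 tau eps3 eta2])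
    show "digraph V E" "extremal eps V E" "semideg_ge E V (real (card V) / 2)" using H by auto
    show "u > 0" "eps = u^6" "eps powr (1/3) = u^2" "u \<le> eps1/100" "eps * real (card V) \<ge> 1"
      by (fact upos ueps u3 cu epsN)+
    show "eps1 \<le> eta1" "100*eta1 \<le> tau" "100*tau \<le> eps3" "100*eps3 \<le> eta2" "eta2 \<le> 1/100"
      using he1 h1 ht h3 h2 by linarith+
  qed
qed

theorem proposition4p5:
  shows "\<exists>eta2_0>0. \<forall>eta2::real. 0 < eta2 \<and> eta2 < eta2_0 \<longrightarrow>
    (\<exists>eps3_0>0. \<forall>eps3::real. 0 < eps3 \<and> eps3 < eps3_0 \<longrightarrow>
    (\<exists>tau_0>0. \<forall>tau::real. 0 < tau \<and> tau < tau_0 \<longrightarrow>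
    (\<exists>eta1_0>0. \<forall>eta1::real. 0 < eta1 \<and> eta1 < eta1_0 \<longrightarrow>
    (\<exists>eps1_0>0. \<forall>eps1::real. 0 < eps1 \<and> eps1 < eps1_0 \<longrightarrow>
    (\<exists>eps_0>0. \<forall>eps::real. 0 < eps \<and> eps < eps_0 \<longrightarrow>
    (\<exists>n_0::nat. \<forall>(V::nat set) (E::(nat \<times> nat) set).
       digraph V E \<and> card V \<ge> n_0 \<and> extremal eps V E \<and>
       semideg_ge E V (real (card V) / 2) \<longrightarrow>
       (\<exists>A B S T. partition4 V A B S T \<and>
          (condP eps3 eta2 V E A B S T \<or>
           (condQ eps3 V E A B S T \<and> card A \<le> card B) \<or>
           condR eps eps1 eta1 tau V E A B S T))))))))"
  apply (rule exI[of _ "1/100"], intro conjI allI impI, simp)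
  subgoal for eta2
    apply (rule exI[of _ "eta2/100"], intro conjI allI impI, simp)
    subgoal for eps3
      apply (rule exI[of _ "eps3/100"], intro conjI allI impI, simp)
      subgoal for tau
        apply (rule exI[of _ "tau/100"], intro conjI allI impI, simp)
        subgoal for eta1
          apply (rule exI[of _ "eta1"], intro conjI allI impI, simp)
          subgoal for eps1
            apply (rule exI[of _ "(eps1/100)^6"], intro conjI allI impI, simp)
            subgoal for eps
              apply (rule exI[of _ "nat \<lceil>1/eps\<rceil>"], intro allI impI)
              subgoal for V E
                using final_step[of eta2 eps3 tau eta1 eps1 eps V E] by blast
              done
            done
          done
        done
      done
    done
  done

end
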